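(* Every closed directed family $\mathcal P\subset\nabla$ is cross modal.
   Context: $\nabla=\{(\lambda,\boldsymbol p):\lambda\ge0,\ 1\ge p_1\ge p_2\ge\dots\ge0,\ \sum_ip_i<\infty\}$, partially ordered componentwise. For $(\lambda,\boldsymbol p)\in\nabla$, $f(k;\lambda,\boldsymbol p)$ is the probability that $X+\sum_iB_i=k$ where $X\sim\mathrm{Poisson}(\lambda)$, $B_i\sim\mathrm{Bernoulli}(p_i)$ are independent, with $f(-1;\cdot)=0$. $\nabla$ carries the topology in which $(\lambda_j,\boldsymbol p_j)\to(\lambda,\boldsymbol p)$ iff $f(k;\lambda_j,\boldsymbol p_j)\to f(k;\lambda,\boldsymbol p)$ for all $k$; closed refers to this topology. The leading mode $m_+(\lambda,\boldsymbol p)$ is the unique integer $k$ with $f(k-1)\le f(k)>f(k+1)$; $m_-=m_+$ unless $f(m_+-1)=f(m_+)$, in which case $m_-=m_+-1$; the modes are the points where $f(\cdot;\lambda,\boldsymbol p)$ is maximal. A family $\mathcal P\subset\nabla$ is directed if $(0,\boldsymbol 0)\in\mathcal P$ and for every $k\ge0$: (a) for each $(\lambda,\boldsymbol p)\in\mathcal P$ with $m_+(\lambda,\boldsymbol p)=k$ there is $(\lambda',\boldsymbol p')\in\mathcal P$ with $(\lambda',\boldsymbol p')\ge(\lambda,\boldsymbol p)$, $m_+(\lambda',\boldsymbol p')=k+1$ and $f(k+1;\lambda',\boldsymbol p')>f(k+1;\lambda,\boldsymbol p)$; (b) for each $(\lambda,\boldsymbol p)\in\mathcal P$ with $m_-(\lambda,\boldsymbol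 p)=k+1$ there is $(\lambda',\boldsymbol p')\in\mathcal P$ with $(\lambda,\boldsymbol p)\ge(\lambda',\boldsymbol p')$, $m_-(\lambda',\boldsymbol p')=k$ and $f(k;\lambda,\boldsymbol p)<f(k;\lambda',\boldsymbol p')$. The family $\mathcal P$ is cross modal if for every $k\ge0$ the likelihood $(\lambda,\boldsymbol p)\mapsto f(k;\lambda,\boldsymbol p)$ attains its maximum over $\mathcal P$ and for every maximiser, $k$ is a mode of $f(\cdot;\lambda,\boldsymbol p)$. *)

theory Defs
  imports Complex_Main
begin

text \<open>A point of nabla is a pair (lambda, p) with p :: nat => real (index i of the
paper corresponds to p (i-1)).\<close>

type_synonym pbpar = "real \<times> (nat \<Rightarrow> real)"

definition nabla :: "pbpar set" where
  "nabla = {(l, p). l \<ge> 0 \<and> p 0 \<le> 1 \<and> (\<forall>i. p (Suc i) \<le> p i) \<and> (\<forall>i. 0 \<le> p i)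
                  \<and> summable p}"

definition pb_le :: "pbpar \<Rightarrow> pbpar \<Rightarrow> bool" where
  "pb_le q q' \<longleftrightarrow> fst q \<le> fst q' \<and> (\<forall>i. snd q i \<le> snd q' i)"

text \<open>Distribution of X + B_0 + ... + B_(n-1), X ~ Poisson(l), B_i ~ Bernoulli(p i)
independent; value 0 at negative integers.\<close>
fun pb_partial :: "real \<Rightarrow> (nat \<Rightarrow> real) \<Rightarrow> nat \<Rightarrow> int \<Rightarrow> real" where
  "pb_partial l p 0 k = (if k < 0 then 0 else exp (- l) * l ^ nat k / fact (nat k))"
| "pb_partial l p (Suc n) k = (1 - p n) * pb_partial l p n k + p n * pb_partial l p n (k - 1)"

text \<open>f(k; lambda, p) = P(X + sum_i B_i = k); the infinite sum converges a.s., so this is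
the limit of the finite partial distributions.\<close>
definition pbf :: "int \<Rightarrow> pbpar \<Rightarrow> real" where
  "pbf k q = lim (\<lambda>n. pb_partial (fst q) (snd q) n k)"

definition m_plus :: "pbpar \<Rightarrow> nat" where
  "m_plus q = (THE k::nat. pbf (int k - 1) q \<le> pbf (int k) q \<and> pbf (int k) q > pbf (int k + 1) q)"

definition m_minus :: "pbpar \<Rightarrow> nat" where
  "m_minus q = (if pbf (int (m_plus q) - 1) q = pbf (int (m_plus q)) q then m_plus q - 1 else m_plus q)"

definition is_mode :: "nat \<Rightarrow> pbpar \<Rightarrow> bool" where
  "is_mode k q \<longleftrightarrow> (\<forall>j. pbf j q \<le> pbf (int k) q)"

text \<open>Closedness in nabla for the (metrizable) topology of pointwise convergence of f.\<close>
definition nabla_closed :: "pbpar set \<Rightarrow> bool" where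
  "nabla_closed P \<longleftrightarrow> (\<forall>s q. (\<forall>j. s j \<in> P) \<longrightarrow> q \<in> nabla \<longrightarrow>
       (\<forall>k. (\<lambda>j. pbf k (s j)) \<longlonglongrightarrow> pbf k q) \<longrightarrow> q \<in> P)"

definition directed :: "pbpar set \<Rightarrow> bool" where
  "directed P \<longleftrightarrow> (0, \<lambda>_. 0) \<in> P \<and>
    (\<forall>k::nat.
      (\<forall>q\<in>P. m_plus q = k \<longrightarrow>
         (\<exists>q'\<in>P. pb_le q q' \<and> m_plus q' = k + 1 \<and> pbf (int k + 1) q' > pbf (int k + 1) q)) \<and>
      (\<forall>q\<in>P. m_minus q = k + 1 \<longrightarrow>
         (\<exists>q'\<in>P. pb_le q' q \<and> m_minus q' = k \<and> pbf (int k) q < pbf (int k) q')))"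

definition cross_modal :: "pbpar set \<Rightarrow> bool" where
  "cross_modal P \<longleftrightarrow> (\<forall>k::nat.
      (\<exists>q\<in>P. \<forall>q'\<in>P. pbf (int k) q' \<le> pbf (int k) q) \<and>
      (\<forall>q\<in>P. (\<forall>q'\<in>P. pbf (int k) q' \<le> pbf (int k) q) \<longrightarrow> is_mode k q))"

end

theory Submission
  imports Defs "HOL-Library.Diagonal_Subsequence"
begin

definition Poi :: "real \<Rightarrow> int \<Rightarrow> real" where
  "Poi l k = (if k < 0 then 0 else exp (- l) * l ^ nat k / fact (nat k))"

definition Bop :: "real \<Rightarrow> (int \<Rightarrow> real) \<Rightarrow> int \<Rightarrow> real" where
  "Bop t g = (\<lambda>k. (1 - t) * g k + t * g (k - 1))"

primrec gen :: "(int \<Rightarrow> real) \<Rightarrow> (nat \<Rightarrow> real) \<Rightarrow> nat \<Rightarrow> int \<Rightarrow> real" where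
  "gen g p 0 = g"
| "gen g p (Suc n) = Bop (p n) (gen g p n)"

lemma pb_partial_gen: "pb_partial l p n = gen (Poi l) p n"
  by (induction n) (auto simp: Poi_def Bop_def fun_eq_iff)

lemma Bop_comm: "Bop s (Bop t g) = Bop t (Bop s g)"
  by (auto simp: Bop_def fun_eq_iff algebra_simps)

lemma Bop_gen: "Bop t (gen g p n) = gen (Bop t g) p n"
  by (induction n) (simp_all, subst Bop_comm, simp)

lemma gen_gen: "gen (gen g a n) b m = gen (gen g b m) a n"
proof (induction m)
  case 0 then show ?case by simp
next
  case (Suc m) then show ?case by (simp add: Bop_gen)
qed

lemma gen_add: "gen g p (n + m) = gen (gen g p n) (\<lambda>i. p (n + i)) m"
  by (induction m) auto

lemma gen_cong: "(\<And>i. i < n \<Longrightarrow> p i = p' i) \<Longrightarrow> gen g p n = gen g p' n"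
  by (induction n) auto

lemma Bop_0[simp]: "Bop 0 g = g"
  by (simp add: Bop_def)

lemma gen_zeros: "(\<And>i. n \<le> i \<Longrightarrow> i < m \<Longrightarrow> p i = 0) \<Longrightarrow> n \<le> m \<Longrightarrow> gen g p m = gen g p n"
proof (induction m)
  case 0 then show ?case by simp
next
  case (Suc m)
  show ?case
  proof (cases "n = Suc m")
    case True then show ?thesis by simp
  next
    case False
    then have "n \<le> m" using Suc by auto
    then show ?thesis using Suc by auto
  qed
qed

lemma Bop_diff: "Bop t (\<lambda>k. g k - h k) = (\<lambda>k. Bop t g k - Bop t h k)"
  by (auto simp: Bop_def fun_eq_iff algebra_simps)

lemma gen_diff: "gen (\<lambda>k. g k - h k) p n = (\<lambda>k. gen g p n k - gen h p n k)"
  by (induction n) (auto simp: Bop_diff)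

lemma gen_extract: "s < n \<Longrightarrow> gen g c n = Bop (c s) (gen g (c(s := 0)) n)"
proof (induction n)
  case 0 then show ?case by simp
next
  case (Suc n)
  show ?case
  proof (cases "s = n")
    case True
    have "gen g (c(s := 0)) n = gen g c n" by (rule gen_cong) (use True in auto)
    then show ?thesis using True by (simp only: gen.simps fun_upd_same Bop_0)
  next
    case False
    then have "s < n" using Suc by auto
    then show ?thesis using Suc False by (simp add: Bop_comm)
  qed
qed

definition supp0 :: "(int \<Rightarrow> real) \<Rightarrow> bool" where
  "supp0 g \<longleftrightarrow> (\<forall>k<0. g k = 0)"

lemma supp0_Bop: "supp0 g \<Longrightarrow> supp0 (Bop t g)"
  by (auto simp: supp0_def Bop_def)

lemma supp0_gen: "supp0 g \<Longrightarrow> supp0 (gen g p n)"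
  by (induction n) (auto simp: supp0_Bop)

lemma supp0_Poi: "supp0 (Poi l)"
  by (auto simp: supp0_def Poi_def)

definition nrm :: "(int \<Rightarrow> real) \<Rightarrow> nat \<Rightarrow> real" where
  "nrm d K = (\<Sum>j\<le>K. \<bar>d (int j)\<bar>)"

lemma nrm_nonneg: "0 \<le> nrm d K"
  by (auto simp: nrm_def intro: sum_nonneg)

lemma shift_sum: "supp0 d \<Longrightarrow> (\<Sum>j\<le>K. \<bar>d (int j - 1)\<bar>) = (\<Sum>j<K. \<bar>d (int j)\<bar>)"
proof (induction K)
  case 0 then show ?case by (auto simp: supp0_def)
next
  case (Suc K)
  then show ?case by (simp add: of_nat_Suc)
qed

lemma shift_le: "supp0 d \<Longrightarrow> (\<Sum>j\<le>K. \<bar>d (int j - 1)\<bar>) \<le> nrm d K"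
  unfolding nrm_def shift_sum by (rule sum_mono2) auto

lemma nrm_Bop: assumes "supp0 d" "0 \<le> t" "t \<le> 1" shows "nrm (Bop t d) K \<le> nrm d K"
proof -
  have "nrm (Bop t d) K \<le> (\<Sum>j\<le>K. (1 - t) * \<bar>d (int j)\<bar> + t * \<bar>d (int j - 1)\<bar>)"
    unfolding nrm_def Bop_def
  proof (rule sum_mono)
    fix j assume "j \<in> {..K}"
    have "\<bar>(1 - t) * d (int j) + t * d (int j - 1)\<bar> \<le> \<bar>(1 - t) * d (int j)\<bar> + \<bar>t * d (int j - 1)\<bar>"
      by (rule abs_triangle_ineq)
    also have "\<dots> = (1 - t) * \<bar>d (int j)\<bar> + t * \<bar>d (int j - 1)\<bar>"
      using assms by (simp add: abs_mult)
    finally show "\<bar>(1 - t) * d (int j) + t * d (int j - 1)\<bar> \<le> (1 - t) * \<bar>d (int j)\<bar> + t * \<bar>d (int j - 1)\<bar>" .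
  qed
  also have "\<dots> = (1 - t) * nrm d K + t * (\<Sum>j\<le>K. \<bar>d (int j - 1)\<bar>)"
    by (simp add: nrm_def sum.distrib sum_distrib_left)
  also have "\<dots> \<le> (1 - t) * nrm d K + t * nrm d K"
    using shift_le[OF assms(1), of K] assms by (intro add_mono mult_left_mono) auto
  finally show ?thesis by (simp add: algebra_simps)
qed

definition unitp :: "(nat \<Rightarrow> real) \<Rightarrow> bool" where
  "unitp p \<longleftrightarrow> (\<forall>i. 0 \<le> p i \<and> p i \<le> 1)"

lemma nrm_gen: assumes "supp0 d" "unitp p" shows "nrm (gen d p n) K \<le> nrm d K"
proof (induction n)
  case 0 then show ?case by simp
next
  case (Suc n)
  have "nrm (gen d p (Suc n)) K \<le> nrm (gen d p n) K"
    using assms by (auto simp: unitp_def intro!: nrm_Bop supp0_gen)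
  then show ?case using Suc by linarith
qed

lemma abs_le_nrm: "j \<le> K \<Longrightarrow> \<bar>d (int j)\<bar> \<le> nrm d K"
  unfolding nrm_def by (rule member_le_sum) auto

lemma nrm_Bop_diff: assumes "supp0 g" "0 \<le> t"
  shows "nrm (\<lambda>k. Bop t g k - g k) K \<le> 2 * t * nrm g K"
proof -
  have "nrm (\<lambda>k. Bop t g k - g k) K = (\<Sum>j\<le>K. t * \<bar>g (int j - 1) - g (int j)\<bar>)"
    unfolding nrm_def Bop_def
  proof (intro sum.cong refl)
    fix x
    have "(1 - t) * g (int x) + t * g (int x - 1) - g (int x) = t * (g (int x - 1) - g (int x))"
      by (simp add: algebra_simps)
    then show "\<bar>(1 - t) * g (int x) + t * g (int x - 1) - g (int x)\<bar> = t * \<bar>g (int x - 1) - g (int x)\<bar>"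
      using assms by (simp add: abs_mult)
  qed
  also have "\<dots> \<le> (\<Sum>j\<le>K. t * \<bar>g (int j - 1)\<bar> + t * \<bar>g (int j)\<bar>)"
    using assms by (intro sum_mono) (auto simp flip: distrib_left intro!: mult_left_mono abs_triangle_ineq4)
  also have "\<dots> = t * (\<Sum>j\<le>K. \<bar>g (int j - 1)\<bar>) + t * nrm g K"
    by (simp add: nrm_def sum.distrib sum_distrib_left)
  also have "\<dots> \<le> t * nrm g K + t * nrm g K"
    using shift_le[OF assms(1), of K] assms by (intro add_mono mult_left_mono) auto
  finally show ?thesis by simp
qed


lemma exp_partial_le: assumes "0 \<le> (x::real)" shows "(\<Sum>j\<le>K. x ^ j / fact j) \<le> exp x"
proof -
  have s: "(\<lambda>n. x ^ n / fact n) sums exp x"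
    using exp_converges[of x] by (simp add: divide_inverse mult.commute scaleR_conv_of_real)
  have "(\<Sum>j\<le>K. x ^ j / fact j) \<le> suminf (\<lambda>n. x ^ n / fact n)"
    by (rule sum_le_suminf) (use s assms in \<open>auto simp: sums_iff\<close>)
  then show ?thesis using s by (simp add: sums_iff)
qed

lemma exp_term_le: assumes "0 \<le> (x::real)" shows "x ^ j / fact j \<le> exp x"
proof -
  have "x ^ j / fact j \<le> (\<Sum>i\<le>j. x ^ i / fact i)"
    by (rule member_le_sum) (use assms in auto)
  then show ?thesis using exp_partial_le[OF assms, of j] by linarith
qed

lemma Poi_nonneg: "0 \<le> l \<Longrightarrow> 0 \<le> Poi l k"
  by (auto simp: Poi_def)

lemma Poi_nat: "Poi l (int j) = exp (- l) * l ^ j / fact j"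
  by (simp add: Poi_def)

lemma nrm_Poi: assumes "0 \<le> l" shows "nrm (Poi l) K \<le> 1"
proof -
  have "nrm (Poi l) K = exp (- l) * (\<Sum>j\<le>K. l ^ j / fact j)"
    unfolding nrm_def Poi_nat using assms by (simp add: sum_distrib_left abs_mult)
  also have "\<dots> \<le> exp (- l) * exp l"
    by (intro mult_left_mono exp_partial_le assms) auto
  also have "\<dots> = 1" by (simp add: exp_minus)
  finally show ?thesis .
qed

lemma Poi_le1: assumes "0 \<le> l" shows "Poi l k \<le> 1"
proof (cases "k < 0")
  case True then show ?thesis by (simp add: Poi_def)
next
  case False
  then have "Poi l k = \<bar>Poi l (int (nat k))\<bar>" using Poi_nonneg[OF assms] by simp
  also have "\<dots> \<le> nrm (Poi l) (nat k)" by (rule abs_le_nrm) auto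
  finally show ?thesis using nrm_Poi[OF assms, of "nat k"] by linarith
qed

definition ULC :: "(int \<Rightarrow> real) \<Rightarrow> bool" where
  "ULC g \<longleftrightarrow> (\<forall>A B. -1 \<le> A \<longrightarrow> A \<le> B \<longrightarrow>
      of_int (B + 1) * g A * g (B + 1) \<le> of_int (A + 1) * g (A + 1) * g B)"

lemma cancel_aux: "(c::real) > 0 \<Longrightarrow> c * (E * x / F) * (E * y / (c * G)) = E * E * (x * y) / (F * G)"
  by (simp add: field_simps)

lemma cancel_aux2: "(c::real) > 0 \<Longrightarrow> c * (E * x / (c * F)) * (E * y / G) = E * E * (x * y) / (F * G)"
  by (simp add: field_simps)

lemma Poi_ULC: assumes "0 \<le> l" shows "ULC (Poi l)"
  unfolding ULC_def
proof (intro allI impI)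
  fix A B :: int assume AB: "-1 \<le> A" "A \<le> B"
  show "of_int (B + 1) * Poi l A * Poi l (B + 1) \<le> of_int (A + 1) * Poi l (A + 1) * Poi l B"
  proof (cases "A = -1")
    case True then show ?thesis by (simp add: Poi_def)
  next
    case False
    then have "0 \<le> A" "0 \<le> B" using AB by auto
    then obtain a b :: nat where ab: "A = int a" "B = int b"
      using nonneg_int_cases by metis
    have fa: "fact (Suc a) = (real a + 1) * fact a" and fb: "fact (Suc b) = (real b + 1) * fact b"
      by (simp_all add: fact_Suc)
    have oa: "of_int (A + 1) = real a + 1" and ob: "of_int (B + 1) = real b + 1" using ab by simp_all
    have pa: "Poi l A = exp (-l) * l ^ a / fact a" and pb: "Poi l B = exp (-l) * l ^ b / fact b"
      using ab Poi_nat by auto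
    have e1: "Poi l (B + 1) = exp (-l) * l ^ Suc b / fact (Suc b)" using ab
      by (metis Poi_nat of_nat_Suc add.commute)
    have e2: "Poi l (A + 1) = exp (-l) * l ^ Suc a / fact (Suc a)" using ab
      by (metis Poi_nat of_nat_Suc add.commute)
    have "of_int (B + 1) * Poi l A * Poi l (B + 1) = exp (-l) * exp (-l) * (l ^ a * l ^ Suc b) / (fact a * fact b)"
      unfolding e1 fb ob pa by (rule cancel_aux) simp
    also have "\<dots> = of_int (A + 1) * Poi l (A + 1) * Poi l B"
      unfolding e2 fa oa pb by (subst cancel_aux2) (auto simp: mult.commute)
    finally show ?thesis by simp
  qed
qed

lemma Poi_zbound: assumes "0 \<le> l" "0 \<le> z" "z \<le> 1"
  shows "z ^ j * Poi l (int j) \<le> exp (- ((1 - z) * l))"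
proof -
  have "z ^ j * Poi l (int j) = exp (- l) * ((z * l) ^ j / fact j)"
    by (simp add: Poi_nat power_mult_distrib)
  also have "\<dots> \<le> exp (- l) * exp (z * l)"
    by (intro mult_left_mono exp_term_le) (use assms in auto)
  also have "\<dots> = exp (- ((1 - z) * l))"
    by (simp add: exp_add[symmetric] algebra_simps)
  finally show ?thesis .
qed

lemma Poi_conv: assumes "0 \<le> a" "0 \<le> t"
  shows "Poi (a + t) (int k) = (\<Sum>i\<le>k. Poi a (int (k - i)) * Poi t (int i))"
proof -
  have "(a + t) ^ k = (\<Sum>i\<le>k. of_nat (k choose i) * t ^ i * a ^ (k - i))"
    using binomial_ring[of t a k] by (simp add: add.commute)
  then have "Poi (a + t) (int k) = exp (- a) * exp (- t) * (\<Sum>i\<le>k. of_nat (k choose i) * t ^ i * a ^ (k - i)) / fact k"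
    by (simp add: Poi_nat exp_add[symmetric])
  also have "\<dots> = (\<Sum>i\<le>k. exp (- a) * exp (- t) * (of_nat (k choose i) * t ^ i * a ^ (k - i)) / fact k)"
    by (simp add: sum_distrib_left sum_divide_distrib)
  also have "\<dots> = (\<Sum>i\<le>k. Poi a (int (k - i)) * Poi t (int i))"
  proof (intro sum.cong refl)
    fix i assume "i \<in> {..k}"
    then have ik: "i \<le> k" by simp
    have "real (k choose i) = fact k / (fact i * fact (k - i))"
      using binomial_fact[OF ik] by simp
    then show "exp (- a) * exp (- t) * (of_nat (k choose i) * t ^ i * a ^ (k - i)) / fact k =
          Poi a (int (k - i)) * Poi t (int i)"
      by (simp add: Poi_nat field_simps)
  qed
  finally show ?thesis .
qed

lemma Poi_cont: "(f \<longlongrightarrow> l) F \<Longrightarrow> ((\<lambda>x. Poi (f x) k) \<longlongrightarrow> Poi l k) F"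
  unfolding Poi_def by (cases "k < 0") (auto intro!: tendsto_intros)


definition bern :: "real \<Rightarrow> nat \<Rightarrow> real" where
  "bern t i = (if i = 0 then 1 - t else if i = 1 then t else 0)"

lemma Bop_conv: assumes "supp0 g"
  shows "Bop t g (int k) = (\<Sum>i\<le>k. g (int (k - i)) * bern t i)"
proof -
  have "(\<Sum>i\<le>k. g (int (k - i)) * bern t i) = (\<Sum>i\<in>{..k} \<inter> {0,1}. g (int (k - i)) * bern t i)"
    by (rule sum.mono_neutral_right) (auto simp: bern_def)
  also have "\<dots> = Bop t g (int k)"
  proof (cases k)
    case 0 then show ?thesis using assms by (simp add: Bop_def bern_def supp0_def)
  next
    case (Suc m)
    then have "{..k} \<inter> {0,1} = {0,1}" by auto
    then show ?thesis using Suc by (simp add: Bop_def bern_def algebra_simps)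
  qed
  finally show ?thesis by simp
qed

lemma nrm_triangle: "nrm (\<lambda>k. f k + g k) K \<le> nrm f K + nrm g K"
  unfolding nrm_def by (simp add: sum.distrib[symmetric] sum_mono abs_triangle_ineq)

lemma exp_minus_ge: "1 - (t::real) \<le> exp (- t)"
  using exp_ge_add_one_self[of "-t"] by simp

lemma err_sum: assumes "0 \<le> t"
  shows "(\<Sum>i\<le>K. \<bar>Poi t (int i) - bern t i\<bar>) \<le> 2 * t ^ 2"
proof -
  define e where "e i = \<bar>Poi t (int i) - bern t i\<bar>" for i
  have e_nonneg: "0 \<le> e i" for i by (simp add: e_def)
  have "(\<Sum>i\<le>K. e i) \<le> (\<Sum>i\<le>Suc K. e i)"
    by (rule sum_mono2) (auto simp: e_nonneg)
  also have "\<dots> = (\<Sum>i\<le>Suc K. e i - Poi t (int i)) + (\<Sum>i\<le>Suc K. Poi t (int i))"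
    by (simp add: sum.distrib[symmetric])
  also have "(\<Sum>i\<le>Suc K. e i - Poi t (int i)) = (\<Sum>i\<in>{0,1}. e i - Poi t (int i))"
    by (rule sum.mono_neutral_right) (use Poi_nonneg[OF assms] in \<open>auto simp: e_def bern_def\<close>)
  also have "\<dots> = (e 0 - Poi t 0) + (e 1 - Poi t 1)" by simp
  also have "e 0 = exp (- t) - (1 - t)"
    using exp_minus_ge[of t] by (simp add: e_def bern_def Poi_def)
  also have "e 1 = t - t * exp (- t)"
  proof -
    have "t * exp (- t) \<le> t" using assms by (simp add: mult_left_le)
    then show ?thesis by (simp add: e_def bern_def Poi_def mult.commute)
  qed
  also have "(\<Sum>i\<le>Suc K. Poi t (int i)) \<le> 1"
    using nrm_Poi[OF assms, of "Suc K"] Poi_nonneg[OF assms] by (simp add: nrm_def)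
  finally have "(\<Sum>i\<le>K. e i) \<le> 2 * t * (1 - exp (- t))"
    by (simp add: Poi_def algebra_simps)
  also have "\<dots> \<le> 2 * t * t"
    using exp_minus_ge[of t] assms by (intro mult_left_mono) auto
  finally show ?thesis by (simp add: e_def power2_eq_square)
qed

lemma LeCam1: assumes "0 \<le> a" "0 \<le> t"
  shows "nrm (\<lambda>k. Bop t (Poi a) k - Poi (a + t) k) K \<le> 2 * t ^ 2"
proof -
  define e where "e i = Poi t (int i) - bern t i" for i
  have D: "Bop t (Poi a) (int k) - Poi (a + t) (int k) = - (\<Sum>i\<le>k. Poi a (int (k - i)) * e i)" for k
    unfolding Bop_conv[OF supp0_Poi] Poi_conv[OF assms] e_def
    by (simp add: sum_subtractf[symmetric] sum_negf[symmetric] algebra_simps)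
  have "nrm (\<lambda>k. Bop t (Poi a) k - Poi (a + t) k) K \<le> (\<Sum>k\<le>K. \<Sum>i\<le>k. \<bar>e i\<bar> * Poi a (int (k - i)))"
    unfolding nrm_def D
  proof (rule sum_mono)
    fix k
    have "\<bar>- (\<Sum>i\<le>k. Poi a (int (k - i)) * e i)\<bar> \<le> (\<Sum>i\<le>k. \<bar>Poi a (int (k - i)) * e i\<bar>)"
      by (simp only: abs_minus_cancel sum_abs)
    also have "\<dots> = (\<Sum>i\<le>k. \<bar>e i\<bar> * Poi a (int (k - i)))"
      using Poi_nonneg[OF assms(1)] by (simp add: abs_mult mult.commute)
    finally show "\<bar>- (\<Sum>i\<le>k. Poi a (int (k - i)) * e i)\<bar> \<le> (\<Sum>i\<le>k. \<bar>e i\<bar> * Poi a (int (k - i)))" .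
  qed
  also have "\<dots> = (\<Sum>(i, j)\<in>{(i, j). i + j \<le> K}. \<bar>e i\<bar> * Poi a (int j))"
    by (rule sum.triangle_reindex_eq[symmetric])
  also have "\<dots> \<le> (\<Sum>(i, j)\<in>{..K} \<times> {..K}. \<bar>e i\<bar> * Poi a (int j))"
    by (rule sum_mono2) (use Poi_nonneg[OF assms(1)] in auto)
  also have "\<dots> = (\<Sum>i\<le>K. \<bar>e i\<bar>) * (\<Sum>j\<le>K. Poi a (int j))"
    by (simp add: sum.cartesian_product[symmetric] sum_product)
  also have "\<dots> \<le> (\<Sum>i\<le>K. \<bar>e i\<bar>) * 1"
    using nrm_Poi[OF assms(1), of K] Poi_nonneg[OF assms(1)]
    by (intro mult_left_mono) (auto simp: nrm_def intro: sum_nonneg)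
  also have "\<dots> \<le> 2 * t ^ 2"
    using err_sum[OF assms(2), of K] by (simp add: e_def)
  finally show ?thesis .
qed

lemma LeCam_chain: assumes "0 \<le> a" "unitp p"
  shows "nrm (\<lambda>k. gen (Poi a) p n k - Poi (a + (\<Sum>i<n. p i)) k) K \<le> 2 * (\<Sum>i<n. (p i) ^ 2)"
proof (induction n)
  case 0 then show ?case by (simp add: nrm_def)
next
  case (Suc n)
  define s where "s = a + (\<Sum>i<n. p i)"
  have s0: "0 \<le> s" using assms unfolding s_def unitp_def by (intro add_nonneg_nonneg sum_nonneg) auto
  have p0: "0 \<le> p n" "p n \<le> 1" using assms by (auto simp: unitp_def)
  have eq: "(\<lambda>k. gen (Poi a) p (Suc n) k - Poi (a + (\<Sum>i<Suc n. p i)) k) =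
     (\<lambda>k. Bop (p n) (\<lambda>k. gen (Poi a) p n k - Poi s k) k + (Bop (p n) (Poi s) k - Poi (s + p n) k))"
    by (simp add: Bop_diff s_def algebra_simps)
  have "nrm (\<lambda>k. gen (Poi a) p (Suc n) k - Poi (a + (\<Sum>i<Suc n. p i)) k) K \<le>
     nrm (Bop (p n) (\<lambda>k. gen (Poi a) p n k - Poi s k)) K + nrm (\<lambda>k. Bop (p n) (Poi s) k - Poi (s + p n) k) K"
    unfolding eq by (rule nrm_triangle)
  also have "\<dots> \<le> nrm (\<lambda>k. gen (Poi a) p n k - Poi s k) K + 2 * (p n) ^ 2"
  proof (intro add_mono nrm_Bop LeCam1)
    show "supp0 (\<lambda>k. gen (Poi a) p n k - Poi s k)"
      using supp0_gen[OF supp0_Poi, of a p n] supp0_Poi[of s] by (simp add: supp0_def)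
  qed (use p0 s0 in auto)
  also have "\<dots> \<le> 2 * (\<Sum>i<Suc n. (p i) ^ 2)"
    using Suc by (simp add: s_def)
  finally show ?case .
qed


definition good :: "(int \<Rightarrow> real) \<Rightarrow> bool" where
  "good g \<longleftrightarrow> (\<forall>k. 0 \<le> g k) \<and> supp0 g \<and> (\<lambda>n. g (int n)) \<longlonglongrightarrow> 0 \<and> (\<exists>k. g k \<noteq> 0) \<and> ULC g"

lemma goodD: assumes "good g"
  shows "\<And>k. 0 \<le> g k" "\<And>k. k < 0 \<Longrightarrow> g k = 0" "(\<lambda>n. g (int n)) \<longlonglongrightarrow> 0" "\<exists>k. g k \<noteq> 0" "ULC g"
  using assms by (auto simp: good_def supp0_def)

lemma good_PF: assumes "good g" "i \<le> j"
  shows "g i * g (j + 1) \<le> g (i + 1) * g j"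
proof (cases "i < 0")
  case True
  then show ?thesis using goodD[OF assms(1)] by simp
next
  case False
  let ?L = "g i * g (j + 1)" and ?R = "g (i + 1) * g j"
  have "of_int (j + 1) * g i * g (j + 1) \<le> of_int (i + 1) * g (i + 1) * g j"
    using goodD(5)[OF assms(1)] False assms(2) unfolding ULC_def by auto
  then have h: "of_int (j + 1) * ?L \<le> of_int (i + 1) * ?R" by (simp add: mult.assoc)
  have L0: "0 \<le> ?L" using goodD(1)[OF assms(1)] by simp
  have "of_int (i + 1) * ?L \<le> of_int (j + 1) * ?L"
    using assms(2) L0 by (intro mult_right_mono) auto
  then have "of_int (i + 1) * ?L \<le> of_int (i + 1) * ?R" using h by linarith
  then show ?thesis using False by (simp add: mult_le_cancel_left)
qed

definition isLM :: "(int \<Rightarrow> real) \<Rightarrow> nat \<Rightarrow> bool" where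
  "isLM g L \<longleftrightarrow> (\<forall>j. g j \<le> g (int L)) \<and> (\<forall>j. int L < j \<longrightarrow> g j < g (int L))"

lemma isLM_unique: assumes "isLM g L" "isLM g L'" shows "L = L'"
proof (rule ccontr)
  assume "L \<noteq> L'"
  then consider "L < L'" | "L' < L" by linarith
  then show False
  proof cases
    case 1
    then have "g (int L') < g (int L)" using assms(1) unfolding isLM_def by auto
    moreover have "g (int L) \<le> g (int L')" using assms(2) unfolding isLM_def by auto
    ultimately show False by simp
  next
    case 2
    then have "g (int L) < g (int L')" using assms(2) unfolding isLM_def by auto
    moreover have "g (int L') \<le> g (int L)" using assms(1) unfolding isLM_def by auto
    ultimately show False by simp
  qed
qed

lemma good_pos: assumes "good g" obtains k0 :: nat where "0 < g (int k0)"
proof -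
  obtain k where "g k \<noteq> 0" using goodD(4)[OF assms] by blast
  moreover have "0 \<le> k"
  proof (rule ccontr)
    assume "\<not> 0 \<le> k"
    then have "g k = 0" using goodD(2)[OF assms, of k] by simp
    then show False using \<open>g k \<noteq> 0\<close> by simp
  qed
  ultimately have "0 < g k" "0 \<le> k" using goodD(1)[OF assms, of k] by auto
  then show ?thesis using that[of "nat k"] by simp
qed

lemma isLM_exists: assumes "good g" shows "\<exists>L. isLM g L"
proof -
  obtain k0 :: nat where k0: "0 < g (int k0)" using good_pos[OF assms] by blast
  from LIMSEQ_D[OF goodD(3)[OF assms] k0] obtain N where N: "\<And>n. n \<ge> N \<Longrightarrow> norm (g (int n) - 0) < g (int k0)"
    by blast
  have N': "\<And>n. n \<ge> N \<Longrightarrow> g (int n) < g (int k0)"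
    using N goodD(1)[OF assms] by (simp add: abs_of_nonneg)
  then have k0N: "k0 < N" by (meson k0 not_le order_less_irrefl)
  define mx where "mx = Max ((\<lambda>j. g (int j)) ` {..N})"
  have mx_ge: "g (int j) \<le> mx" if "j \<le> N" for j
    unfolding mx_def using that by (intro Max_ge) auto
  have "mx \<in> (\<lambda>j. g (int j)) ` {..N}"
    unfolding mx_def by (rule Max_in) auto
  then have mx_in: "\<exists>j\<le>N. g (int j) = mx" by auto
  define S where "S = {j. j \<le> N \<and> g (int j) = mx}"
  have finS: "finite S" unfolding S_def by auto
  have neS: "S \<noteq> {}" using mx_in unfolding S_def by auto
  define L where "L = Max S"
  have LS: "L \<in> S" unfolding L_def using finS neS by (rule Max_in)
  then have gL: "g (int L) = mx" "L \<le> N" unfolding S_def by auto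
  have mxpos: "g (int k0) \<le> mx" using mx_ge k0N by auto
  have all_le: "g j \<le> g (int L)" for j
  proof (cases "j < 0")
    case True then show ?thesis using goodD(1,2)[OF assms, of j] goodD(1)[OF assms, of "int L"] by simp
  next
    case False
    then have "0 \<le> j" by simp
    then obtain n where n: "j = int n" using nonneg_int_cases by blast
    show ?thesis
    proof (cases "n \<le> N")
      case True then show ?thesis using n mx_ge gL by auto
    next
      case False then show ?thesis using n N'[of n] mxpos gL by auto
    qed
  qed
  have above: "g j < g (int L)" if "int L < j" for j
  proof -
    have "0 \<le> j" using that by simp
    then obtain n where n: "j = int n" using nonneg_int_cases by blast
    have Ln: "L < n" using that n by auto
    show ?thesis
    proof (cases "n \<le> N")
      case True
      have "n \<notin> S" using Ln finS L_def Max_ge leD by blast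
      then have "g (int n) \<noteq> mx" using True unfolding S_def by auto
      then show ?thesis using n mx_ge[OF True] gL by auto
    next
      case False then show ?thesis using n N'[of n] mxpos gL by auto
    qed
  qed
  show ?thesis using all_le above unfolding isLM_def by blast
qed

definition LM :: "(int \<Rightarrow> real) \<Rightarrow> nat" where
  "LM g = (THE L. isLM g L)"

lemma LM: assumes "good g" shows "isLM g (LM g)"
  unfolding LM_def using isLM_exists[OF assms] isLM_unique by (metis theI)

lemma LM_eqI: "good g \<Longrightarrow> isLM g L \<Longrightarrow> LM g = L"
  using LM isLM_unique by blast

lemma LM_max: "good g \<Longrightarrow> g j \<le> g (int (LM g))"
  using LM unfolding isLM_def by blast

lemma LM_above: "good g \<Longrightarrow> int (LM g) < j \<Longrightarrow> g j < g (int (LM g))"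
  using LM unfolding isLM_def by blast

lemma LM_pos: assumes "good g" shows "0 < g (int (LM g))"
proof -
  obtain k0 :: nat where "0 < g (int k0)" using good_pos[OF assms] by blast
  then show ?thesis using LM_max[OF assms, of "int k0"] by linarith
qed

lemma good_before: assumes "good g" "j < int (LM g)"
  shows "g j \<le> g (j + 1)"
proof (rule ccontr)
  assume "\<not> g j \<le> g (j + 1)"
  then have c: "g (j + 1) < g j" by simp
  let ?L = "int (LM g)"
  have "g j * g ?L \<le> g (j + 1) * g (?L - 1)"
    using good_PF[OF assms(1), of j "?L - 1"] assms(2) by simp
  also have "\<dots> \<le> g (j + 1) * g ?L"
    using LM_max[OF assms(1)] goodD(1)[OF assms(1)] by (intro mult_left_mono) auto
  finally have "g j * g ?L \<le> g (j + 1) * g ?L" .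
  then have "g j \<le> g (j + 1)" using LM_pos[OF assms(1)] by (simp add: mult_le_cancel_right)
  then show False using c by simp
qed

lemma good_after: assumes "good g" "int (LM g) \<le> j"
  shows "g (j + 1) \<le> g j"
proof (rule ccontr)
  assume "\<not> g (j + 1) \<le> g j"
  then have c: "g j < g (j + 1)" by simp
  let ?L = "int (LM g)"
  have d: "g (?L + 1) < g ?L" using LM_above[OF assms(1), of "?L + 1"] by simp
  have p: "0 < g (j + 1)" using c goodD(1)[OF assms(1), of j] by linarith
  have "g (?L + 1) * g j \<le> g (?L + 1) * g (j + 1)"
    using c goodD(1)[OF assms(1)] by (intro mult_left_mono) auto
  also have "\<dots> < g ?L * g (j + 1)"
    using d p by (intro mult_strict_right_mono) auto
  finally have "g (?L + 1) * g j < g ?L * g (j + 1)" .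
  moreover have "g ?L * g (j + 1) \<le> g (?L + 1) * g j"
    using good_PF[OF assms(1) assms(2)] .
  ultimately show False by simp
qed

lemma good_mono_before: assumes "good g" "i \<le> j" "j \<le> int (LM g)"
  shows "g i \<le> g j"
proof -
  have "\<forall>d::nat. i + int d \<le> int (LM g) \<longrightarrow> g i \<le> g (i + int d)"
  proof
    fix d :: nat
    show "i + int d \<le> int (LM g) \<longrightarrow> g i \<le> g (i + int d)"
    proof (induction d)
      case 0 then show ?case by simp
    next
      case (Suc d)
      show ?case
      proof
        assume h: "i + int (Suc d) \<le> int (LM g)"
        then have "g (i + int d) \<le> g (i + int d + 1)" by (intro good_before[OF assms(1)]) auto
        moreover have e: "i + int (Suc d) = i + int d + 1" by simp
        moreover have "g i \<le> g (i + int d)" using Suc h by simp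
        ultimately show "g i \<le> g (i + int (Suc d))" by (simp only: e)
      qed
    qed
  qed
  from this[rule_format, of "nat (j - i)"] assms show ?thesis by simp
qed

lemma good_mono_after: assumes "good g" "int (LM g) \<le> i" "i \<le> j"
  shows "g j \<le> g i"
proof -
  have "\<forall>d::nat. g (i + int d) \<le> g i"
  proof
    fix d :: nat
    show "g (i + int d) \<le> g i"
    proof (induction d)
      case 0 then show ?case by simp
    next
      case (Suc d)
      have "g (i + int d + 1) \<le> g (i + int d)" by (rule good_after[OF assms(1)]) (use assms in auto)
      moreover have e: "i + int (Suc d) = i + int d + 1" by simp
      ultimately show ?case using Suc by (simp only: e)
    qed
  qed
  from this[rule_format, of "nat (j - i)"] assms show ?thesis by simp
qed

lemma THE_mplus: assumes "good g"
  shows "(THE k::nat. g (int k - 1) \<le> g (int k) \<and> g (int k) > g (int k + 1)) = LM g"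
proof (rule the_equality)
  show "g (int (LM g) - 1) \<le> g (int (LM g)) \<and> g (int (LM g)) > g (int (LM g) + 1)"
    using LM_max[OF assms] LM_above[OF assms] by auto
next
  fix k :: nat assume k: "g (int k - 1) \<le> g (int k) \<and> g (int k) > g (int k + 1)"
  let ?L = "LM g"
  show "k = ?L"
  proof (rule ccontr)
    assume "k \<noteq> ?L"
    then consider "k < ?L" | "?L < k" by linarith
    then show False
    proof cases
      case 1
      then show False using good_before[OF assms, of "int k"] k by auto
    next
      case 2
      have e: "g (int k) \<le> g (int k - 1)" using good_after[OF assms, of "int k - 1"] 2 by auto
      have pk: "0 < g (int k)" using k goodD(1)[OF assms, of "int k + 1"] by linarith
      have "g (int ?L) * g (int k) \<le> g (int ?L + 1) * g (int k - 1)"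
        using good_PF[OF assms, of "int ?L" "int k - 1"] 2 by simp
      also have "\<dots> = g (int ?L + 1) * g (int k)" using e k by simp
      finally have "g (int ?L) \<le> g (int ?L + 1)" using pk by (simp add: mult_le_cancel_right)
      then show False using LM_above[OF assms, of "int ?L + 1"] by simp
    qed
  qed
qed

definition MM :: "(int \<Rightarrow> real) \<Rightarrow> nat" where
  "MM g = (if g (int (LM g) - 1) = g (int (LM g)) then LM g - 1 else LM g)"

lemma MM_le: "MM g \<le> LM g" by (simp add: MM_def)

lemma MM_ge: "LM g \<le> MM g + 1" unfolding MM_def by (cases "LM g") auto

lemma MM_max: assumes "good g" shows "g (int (MM g)) = g (int (LM g))"
proof (cases "g (int (LM g) - 1) = g (int (LM g))")
  case True
  have "LM g \<noteq> 0"
  proof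
    assume "LM g = 0"
    then show False using True LM_pos[OF assms] goodD(2)[OF assms, of "-1"] by simp
  qed
  then show ?thesis using True by (simp add: MM_def of_nat_diff)
qed (simp add: MM_def)

lemma MM_below: assumes "good g" "j < int (MM g)"
  shows "g j < g (int (LM g))"
proof (cases "g (int (LM g) - 1) = g (int (LM g))")
  case False
  then have M: "MM g = LM g" by (simp add: MM_def)
  have "g j \<le> g (int (LM g) - 1)"
    using good_mono_before[OF assms(1), of j "int (LM g) - 1"] assms(2) M by simp
  moreover have "g (int (LM g) - 1) < g (int (LM g))"
    using False LM_max[OF assms(1), of "int (LM g) - 1"] by simp
  ultimately show ?thesis by simp
next
  case True
  let ?L = "int (LM g)"
  have Lne: "LM g \<noteq> 0"
  proof
    assume "LM g = 0"
    then show False using True LM_pos[OF assms(1)] goodD(2)[OF assms(1), of "-1"] by simp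
  qed
  then have M: "int (MM g) = ?L - 1" using True by (simp add: MM_def of_nat_diff)
  show ?thesis
  proof (rule ccontr)
    assume "\<not> g j < g ?L"
    then have gj: "g j = g ?L" using LM_max[OF assms(1), of j] by simp
    have "g j \<le> g (?L - 2)" using good_mono_before[OF assms(1), of j "?L - 2"] assms(2) M by simp
    moreover have "g (?L - 2) \<le> g (?L - 1)" using good_mono_before[OF assms(1), of "?L - 2" "?L - 1"] by simp
    ultimately have e2: "g (?L - 2) = g ?L" using gj True LM_max[OF assms(1), of "?L - 2"] by simp
    have Lpos: "0 < g ?L" by (rule LM_pos[OF assms(1)])
    have "?L - 2 \<ge> 0"
    proof (rule ccontr)
      assume "\<not> ?L - 2 \<ge> 0"
      then have "g (?L - 2) = 0" using goodD(2)[OF assms(1)] by simp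
      then show False using e2 Lpos by simp
    qed
    then have "-1 \<le> ?L - 2" "?L - 2 \<le> ?L - 1" by auto
    then have "of_int (?L - 1 + 1) * g (?L - 2) * g (?L - 1 + 1) \<le> of_int (?L - 2 + 1) * g (?L - 2 + 1) * g (?L - 1)"
      using goodD(5)[OF assms(1)] unfolding ULC_def by blast
    then have "of_int ?L * g ?L * g ?L \<le> of_int (?L - 1) * g ?L * g ?L"
      using e2 True by (simp add: algebra_simps)
    then have "of_int ?L * (g ?L * g ?L) \<le> of_int (?L - 1) * (g ?L * g ?L)" by (simp add: mult.assoc)
    moreover have "0 < g ?L * g ?L" using Lpos by simp
    ultimately show False by (simp add: mult_le_cancel_right)
  qed
qed

lemma mode_iff: assumes "good g"
  shows "(\<forall>j. g j \<le> g (int k)) \<longleftrightarrow> MM g \<le> k \<and> k \<le> LM g"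
proof
  assume h: "\<forall>j. g j \<le> g (int k)"
  then have e: "g (int k) = g (int (LM g))" using LM_max[OF assms, of "int k"] by (simp add: order_antisym)
  have "k \<le> LM g"
  proof (rule ccontr)
    assume "\<not> k \<le> LM g"
    then have "int (LM g) < int k" by simp
    then show False using LM_above[OF assms, of "int k"] e by simp
  qed
  moreover have "MM g \<le> k"
  proof (rule ccontr)
    assume "\<not> MM g \<le> k"
    then have "int k < int (MM g)" by simp
    then show False using MM_below[OF assms, of "int k"] e by simp
  qed
  ultimately show "MM g \<le> k \<and> k \<le> LM g" by simp
next
  assume h: "MM g \<le> k \<and> k \<le> LM g"
  then consider "k = LM g" | "k = MM g" using MM_ge[of g] by linarith
  then have "g (int k) = g (int (LM g))" using MM_max[OF assms] by cases auto
  then show "\<forall>j. g j \<le> g (int k)" using LM_max[OF assms] by simp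
qed


lemma ULC_Bop: assumes U: "ULC g" and nn: "\<And>k. 0 \<le> g k" and s0: "supp0 g" and t: "0 \<le> t" "t \<le> 1"
  shows "ULC (Bop t g)"
  unfolding ULC_def
proof (intro allI impI)
  fix A B :: int assume AB: "-1 \<le> A" "A \<le> B"
  let ?h = "Bop t g"
  have Uf: "\<And>A B. -1 \<le> A \<Longrightarrow> A \<le> B \<Longrightarrow> of_int (B + 1) * g A * g (B + 1) \<le> of_int (A + 1) * g (A + 1) * g B"
    using U unfolding ULC_def by blast
  have gneg: "\<And>k. k < 0 \<Longrightarrow> g k = 0" using s0 by (simp add: supp0_def)
  show "of_int (B + 1) * ?h A * ?h (B + 1) \<le> of_int (A + 1) * ?h (A + 1) * ?h B"
  proof (cases "A = -1")
    case True
    then have "?h A = 0" using gneg by (simp add: Bop_def)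
    then show ?thesis using True by simp
  next
    case False
    then have A0: "0 \<le> A" using AB by simp
    define i where "i = A"
    define j where "j = B"
    define a :: real where "a = of_int i"
    define b :: real where "b = of_int j"
    have ij: "i \<le> j" "0 \<le> i" using AB A0 by (simp_all add: i_def j_def)
    have ab: "a \<le> b" "0 \<le> a" using ij by (simp_all add: a_def b_def)
    have T1: "(b + 1) * (g i * g (j + 1)) \<le> (a + 1) * (g (i + 1) * g j)"
      using Uf[of i j] ij by (simp add: a_def b_def mult.assoc)
    have T2: "(b + 1) * (g (i - 1) * g j) \<le> (a + 1) * (g i * g (j - 1))"
    proof (cases "i = 0")
      case True
      then have "g (i - 1) = 0" using gneg by simp
      then show ?thesis using nn ab by (simp add: mult_nonneg_nonneg)
    next
      case False
      then have i1: "1 \<le> i" using ij by simp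
      have U2: "b * (g (i - 1) * g j) \<le> a * (g i * g (j - 1))"
        using Uf[of "i - 1" "j - 1"] ij by (simp add: a_def b_def mult.assoc)
      define X where "X = g (i - 1) * g j"
      define Y where "Y = g i * g (j - 1)"
      have X0: "0 \<le> X" "0 \<le> Y" using nn by (simp_all add: X_def Y_def)
      have a1: "1 \<le> a" using i1 by (simp add: a_def)
      have "a * Y \<le> b * Y" using ab X0 by (intro mult_right_mono) auto
      then have "b * X \<le> b * Y" using U2 by (simp add: X_def Y_def)
      then have XY: "X \<le> Y" using ab a1 by (simp add: mult_le_cancel_left)
      have "(b + 1) * X = b * X + X" by (simp add: algebra_simps)
      also have "\<dots> \<le> a * Y + Y" using U2 XY by (simp add: X_def Y_def)
      finally show ?thesis by (simp add: X_def Y_def algebra_simps)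
    qed
    have T3: "(b + 1) * (g i * g j + g (i - 1) * g (j + 1)) \<le> (a + 1) * (g (i + 1) * g (j - 1) + g i * g j)"
    proof (cases "i = j")
      case True
      then show ?thesis by (simp add: a_def b_def algebra_simps)
    next
      case False
      then have ij': "i \<le> j - 1" using ij by simp
      have U3: "(b + 1) * (g (i - 1) * g (j + 1)) \<le> a * (g i * g j)"
        using Uf[of "i - 1" j] ij by (simp add: a_def b_def mult.assoc)
      have U4: "b * (g i * g j) \<le> (a + 1) * (g (i + 1) * g (j - 1))"
        using Uf[of i "j - 1"] ij ij' by (simp add: a_def b_def mult.assoc)
      have "(b + 1) * (g i * g j + g (i - 1) * g (j + 1)) = (b + 1) * (g i * g j) + (b + 1) * (g (i - 1) * g (j + 1))"
        by (simp add: algebra_simps)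
      also have "\<dots> \<le> (b + 1) * (g i * g j) + a * (g i * g j)" using U3 by simp
      also have "\<dots> = b * (g i * g j) + (a + 1) * (g i * g j)" by (simp add: algebra_simps)
      also have "\<dots> \<le> (a + 1) * (g (i + 1) * g (j - 1)) + (a + 1) * (g i * g j)" using U4 by simp
      finally show ?thesis by (simp add: algebra_simps)
    qed
    have L: "of_int (B + 1) * ?h A * ?h (B + 1) =
        (1 - t)^2 * ((b + 1) * (g i * g (j + 1))) + t * (1 - t) * ((b + 1) * (g i * g j + g (i - 1) * g (j + 1)))
        + t^2 * ((b + 1) * (g (i - 1) * g j))"
      by (simp add: Bop_def i_def j_def b_def algebra_simps power2_eq_square)
    have R: "of_int (A + 1) * ?h (A + 1) * ?h B =
        (1 - t)^2 * ((a + 1) * (g (i + 1) * g j)) + t * (1 - t) * ((a + 1) * (g (i + 1) * g (j - 1) + g i * g j))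
        + t^2 * ((a + 1) * (g i * g (j - 1)))"
      by (simp add: Bop_def i_def j_def a_def algebra_simps power2_eq_square)
    have tt: "0 \<le> (1 - t)^2" "0 \<le> t * (1 - t)" "0 \<le> t^2" using t by auto
    show ?thesis unfolding L R
      by (intro add_mono mult_left_mono T1 T2 T3 tt)
  qed
qed

lemma good_Bop: assumes "good g" "0 \<le> t" "t \<le> 1" shows "good (Bop t g)"
proof -
  have nn: "\<And>k. 0 \<le> g k" and s0: "supp0 g" and lim: "(\<lambda>n. g (int n)) \<longlonglongrightarrow> 0"
    and ex: "\<exists>k. g k \<noteq> 0" and U: "ULC g"
    using assms(1) by (auto simp: good_def)
  have "(\<lambda>n. g (int (Suc n) - 1)) \<longlonglongrightarrow> 0" using lim by simp
  then have lim2: "(\<lambda>n. g (int n - 1)) \<longlonglongrightarrow> 0" by (rule LIMSEQ_imp_Suc)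
  have limh: "(\<lambda>n. Bop t g (int n)) \<longlonglongrightarrow> 0"
    unfolding Bop_def using tendsto_add[OF tendsto_mult_left[OF lim, of "1 - t"] tendsto_mult_left[OF lim2, of t]]
    by simp
  obtain k where k: "g k \<noteq> 0" using ex by blast
  then have gk: "0 < g k" using nn[of k] by simp
  have exh: "\<exists>k. Bop t g k \<noteq> 0"
  proof (cases "t < 1")
    case True
    have "0 < (1 - t) * g k" using True gk by simp
    moreover have "0 \<le> t * g (k - 1)" using assms nn by simp
    ultimately have "Bop t g k \<noteq> 0" by (simp add: Bop_def)
    then show ?thesis by blast
  next
    case False
    then have "t = 1" using assms by simp
    then have "Bop t g (k + 1) = g k" by (simp add: Bop_def)
    then show ?thesis using k by metis
  qed
  have nnh: "\<And>k. 0 \<le> Bop t g k" using assms nn by (simp add: Bop_def)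
  show ?thesis unfolding good_def
    using nnh supp0_Bop[OF s0] limh exh ULC_Bop[OF U nn s0 assms(2,3)] by blast
qed

lemma good_gen: assumes "good g" "unitp p" shows "good (gen g p n)"
  by (induction n) (use assms in \<open>auto simp: unitp_def intro!: good_Bop\<close>)

lemma Bop_app: "Bop t g k = (1 - t) * g k + t * g (k - 1)"
  by (simp add: Bop_def)

lemma Bop_diffk: "Bop t' G k - Bop t G k = (t' - t) * (G (k - 1) - G k)"
  by (simp add: Bop_def algebra_simps)

lemma SC_lower: assumes "good G" "0 \<le> t" "t \<le> 1" shows "LM G \<le> LM (Bop t G)"
proof (rule ccontr)
  assume "\<not> LM G \<le> LM (Bop t G)"
  then have lt: "LM (Bop t G) < LM G" by simp
  have gh: "good (Bop t G)" using good_Bop assms by blast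
  let ?L = "int (LM G)" and ?m = "int (LM (Bop t G))"
  have "Bop t G ?m \<le> Bop t G ?L"
    unfolding Bop_app[of t G ?m] Bop_app[of t G ?L]
  proof (intro add_mono mult_left_mono)
    show "G ?m \<le> G ?L" by (rule LM_max[OF assms(1)])
    show "G (?m - 1) \<le> G (?L - 1)" using lt by (intro good_mono_before[OF assms(1)]) auto
  qed (use assms in auto)
  moreover have "Bop t G ?L < Bop t G ?m" using LM_above[OF gh, of ?L] lt by simp
  ultimately show False by simp
qed

lemma SC_upper: assumes "good G" "0 \<le> t" "t \<le> 1" shows "LM (Bop t G) \<le> LM G + 1"
proof (cases "t = 0")
  case True then show ?thesis by simp
next
  case False
  then have t0: "0 < t" using assms by simp
  show ?thesis
  proof (rule ccontr)
    assume "\<not> LM (Bop t G) \<le> LM G + 1"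
    then have lt: "LM G + 1 < LM (Bop t G)" by simp
    have gh: "good (Bop t G)" using good_Bop assms by blast
    let ?L = "int (LM G)" and ?m = "int (LM (Bop t G))"
    have a1: "G ?m \<le> G (?L + 1)" using lt by (intro good_mono_after[OF assms(1)]) auto
    have a2: "G (?m - 1) < G ?L" using lt by (intro LM_above[OF assms(1)]) auto
    have "Bop t G ?m < Bop t G (?L + 1)"
      unfolding Bop_app[of t G ?m] Bop_app[of t G "?L + 1"] using a1 a2 t0 assms(3)
      by (intro add_le_less_mono mult_left_mono mult_strict_left_mono) auto
    moreover have "Bop t G (?L + 1) \<le> Bop t G ?m" by (rule LM_max[OF gh])
    ultimately show False by simp
  qed
qed

lemma SC_mono: assumes "good G" "0 \<le> t" "t \<le> t'" "t' \<le> 1"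
  shows "LM (Bop t G) \<le> LM (Bop t' G)"
proof (rule ccontr)
  assume "\<not> LM (Bop t G) \<le> LM (Bop t' G)"
  then have lt: "LM (Bop t' G) < LM (Bop t G)" by simp
  have u: "LM (Bop t G) \<le> LM G + 1" using SC_upper assms by simp
  have l: "LM G \<le> LM (Bop t' G)" using SC_lower assms by simp
  have m: "LM (Bop t G) = LM G + 1" "LM (Bop t' G) = LM G" using u l lt by auto
  have gh: "good (Bop t G)" "good (Bop t' G)" using good_Bop assms by auto
  let ?L = "int (LM G)"
  have mm: "int (LM (Bop t G)) = ?L + 1" using m by simp
  have h1: "Bop t G ?L \<le> Bop t G (?L + 1)" using LM_max[OF gh(1), of ?L] unfolding mm .
  have h2: "Bop t' G (?L + 1) < Bop t' G ?L" using LM_above[OF gh(2), of "?L + 1"] m by simp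
  define x where "x = G (?L + 1) - G ?L"
  define y where "y = G ?L - G (?L - 1)"
  have x: "x < 0" using LM_above[OF assms(1), of "?L + 1"] by (simp add: x_def)
  have y: "0 \<le> y" using LM_max[OF assms(1), of "?L - 1"] by (simp add: y_def)
  have e1: "0 \<le> (1 - t) * x + t * y" using h1 by (simp add: Bop_def x_def y_def algebra_simps)
  have e2: "(1 - t') * x + t' * y < 0" using h2 by (simp add: Bop_def x_def y_def algebra_simps)
  have "(1 - t') * x + t' * y - ((1 - t) * x + t * y) = (t' - t) * (y - x)" by (simp add: algebra_simps)
  moreover have "0 \<le> (t' - t) * (y - x)" using assms x y by simp
  ultimately show False using e1 e2 by linarith
qed

lemma SC_U: assumes "good G" "0 \<le> t" "t \<le> t'" "t' \<le> 1" "int (LM (Bop t' G)) < k"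
  shows "Bop t G k \<le> Bop t' G k"
proof -
  have "LM G \<le> LM (Bop t' G)" using SC_lower assms by simp
  then have "G k \<le> G (k - 1)" using assms(5) by (intro good_mono_after[OF assms(1)]) auto
  then have "0 \<le> Bop t' G k - Bop t G k" unfolding Bop_diffk using assms by simp
  then show ?thesis by simp
qed

lemma SC_D: assumes "good G" "0 \<le> t" "t \<le> t'" "t' \<le> 1" "k < int (LM (Bop t G))"
  shows "Bop t' G k \<le> Bop t G k"
proof -
  have "LM (Bop t G) \<le> LM G + 1" using SC_upper assms by simp
  then have "G (k - 1) \<le> G k" using assms(5) by (intro good_mono_before[OF assms(1)]) auto
  then have "Bop t' G k - Bop t G k \<le> 0" unfolding Bop_diffk using assms by (simp add: mult_nonneg_nonpos)
  then show ?thesis by simp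
qed

definition path :: "(nat \<Rightarrow> real) \<Rightarrow> (nat \<Rightarrow> real) \<Rightarrow> nat \<Rightarrow> nat \<Rightarrow> real" where
  "path a b s = (\<lambda>i. if i < s then b i else a i)"

lemma path_step: assumes "s < n"
  shows "gen g (path a b s) n = Bop (a s) (gen g ((path a b s)(s := 0)) n)"
    "gen g (path a b (Suc s)) n = Bop (b s) (gen g ((path a b s)(s := 0)) n)"
proof -
  show "gen g (path a b s) n = Bop (a s) (gen g ((path a b s)(s := 0)) n)"
    using gen_extract[OF assms, of g "path a b s"] by (simp add: path_def)
  have "(path a b (Suc s))(s := 0) = (path a b s)(s := 0)" by (auto simp: path_def fun_eq_iff)
  then show "gen g (path a b (Suc s)) n = Bop (b s) (gen g ((path a b s)(s := 0)) n)"
    using gen_extract[OF assms, of g "path a b (Suc s)"] by (simp add: path_def)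
qed

lemma path_unitp: "unitp a \<Longrightarrow> unitp b \<Longrightarrow> unitp ((path a b s)(j := 0))"
  by (auto simp: unitp_def path_def)

lemma path_0: "path a b 0 = a" by (simp add: path_def fun_eq_iff)

lemma path_n: "gen g (path a b n) n = gen g b n"
  by (rule gen_cong) (simp add: path_def)

lemma path_U: assumes g: "good g" and ua: "unitp a" and ub: "unitp b" and ab: "\<And>i. a i \<le> b i"
  and k: "int (LM (gen g b n)) < k"
  shows "gen g a n k \<le> gen g b n k" "LM (gen g a n) \<le> LM (gen g b n)"
proof -
  have "\<forall>d. d \<le> n \<longrightarrow> LM (gen g (path a b (n - d)) n) \<le> LM (gen g b n) \<and> gen g (path a b (n - d)) n k \<le> gen g b n k"
  proof
    fix d show "d \<le> n \<longrightarrow> LM (gen g (path a b (n - d)) n) \<le> LM (gen g b n) \<and> gen g (path a b (n - d)) n k \<le> gen g b n k"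
    proof (induction d)
      case 0 then show ?case by (simp add: path_n)
    next
      case (Suc d)
      show ?case
      proof
        assume dn: "Suc d \<le> n"
        define s where "s = n - Suc d"
        have sn: "s < n" and s1: "Suc s = n - d" using dn by (auto simp: s_def)
        define G where "G = gen g ((path a b s)(s := 0)) n"
        have gG: "good G" unfolding G_def by (intro good_gen g path_unitp ua ub)
        have e1: "gen g (path a b s) n = Bop (a s) G" and e2: "gen g (path a b (Suc s)) n = Bop (b s) G"
          using path_step[OF sn] by (simp_all add: G_def)
        have IH: "LM (Bop (b s) G) \<le> LM (gen g b n)" "Bop (b s) G k \<le> gen g b n k"
          using Suc dn by (simp_all add: s1[symmetric] e2)
        have t: "0 \<le> a s" "a s \<le> b s" "b s \<le> 1" using ua ub ab by (auto simp: unitp_def)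
        have "LM (Bop (a s) G) \<le> LM (Bop (b s) G)" by (rule SC_mono[OF gG t])
        moreover have "Bop (a s) G k \<le> Bop (b s) G k"
          by (rule SC_U[OF gG t]) (use IH k in linarith)
        ultimately show "LM (gen g (path a b (n - Suc d)) n) \<le> LM (gen g b n) \<and> gen g (path a b (n - Suc d)) n k \<le> gen g b n k"
          using IH by (simp add: s_def[symmetric] e1)
      qed
    qed
  qed
  from this[rule_format, of n] show "gen g a n k \<le> gen g b n k" "LM (gen g a n) \<le> LM (gen g b n)"
    by (simp_all add: path_0)
qed

lemma path_D: assumes g: "good g" and ua: "unitp a" and ub: "unitp b" and ab: "\<And>i. a i \<le> b i"
  and k: "k < int (LM (gen g a n))"
  shows "gen g b n k \<le> gen g a n k"
proof -
  have "\<forall>s. s \<le> n \<longrightarrow> LM (gen g a n) \<le> LM (gen g (path a b s) n) \<and> gen g (path a b s) n k \<le> gen g a n k"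
  proof
    fix s show "s \<le> n \<longrightarrow> LM (gen g a n) \<le> LM (gen g (path a b s) n) \<and> gen g (path a b s) n k \<le> gen g a n k"
    proof (induction s)
      case 0 then show ?case by (simp add: path_0)
    next
      case (Suc s)
      show ?case
      proof
        assume sn': "Suc s \<le> n"
        then have sn: "s < n" by simp
        define G where "G = gen g ((path a b s)(s := 0)) n"
        have gG: "good G" unfolding G_def by (intro good_gen g path_unitp ua ub)
        have e1: "gen g (path a b s) n = Bop (a s) G" and e2: "gen g (path a b (Suc s)) n = Bop (b s) G"
          using path_step[OF sn] by (simp_all add: G_def)
        have IH: "LM (gen g a n) \<le> LM (Bop (a s) G)" "Bop (a s) G k \<le> gen g a n k"
          using Suc sn by (simp_all add: e1)
        have t: "0 \<le> a s" "a s \<le> b s" "b s \<le> 1" using ua ub ab by (auto simp: unitp_def)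
        have "LM (Bop (a s) G) \<le> LM (Bop (b s) G)" by (rule SC_mono[OF gG t])
        moreover have "Bop (b s) G k \<le> Bop (a s) G k"
          by (rule SC_D[OF gG t]) (use IH k in linarith)
        ultimately show "LM (gen g a n) \<le> LM (gen g (path a b (Suc s)) n) \<and> gen g (path a b (Suc s)) n k \<le> gen g a n k"
          using IH by (simp add: e2)
      qed
    qed
  qed
  from this[rule_format, of n] show ?thesis by (simp add: path_n)
qed


definition valid :: "real \<Rightarrow> (nat \<Rightarrow> real) \<Rightarrow> bool" where
  "valid l p \<longleftrightarrow> 0 \<le> l \<and> unitp p \<and> summable p"

lemma nabla_valid: assumes "q \<in> nabla" shows "valid (fst q) (snd q)"
proof -
  obtain l p where q: "q = (l, p)" by (cases q)
  have h: "l \<ge> 0" "p 0 \<le> 1" "\<And>i. p (Suc i) \<le> p i" "\<And>i. 0 \<le> p i" "summable p"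
    using assms by (auto simp: nabla_def q)
  have "p i \<le> 1" for i
  proof (induction i)
    case 0 then show ?case using h by simp
  next
    case (Suc i) then show ?case using h(3)[of i] by simp
  qed
  then show ?thesis using h by (simp add: valid_def unitp_def q)
qed

lemma gen_nrm1: assumes "0 \<le> l" "unitp p" shows "nrm (gen (Poi l) p n) K \<le> 1"
  using nrm_gen[OF supp0_Poi assms(2), of l n K] nrm_Poi[OF assms(1), of K] by linarith

lemma gen_nonneg: assumes "0 \<le> l" "unitp p" shows "0 \<le> gen (Poi l) p n k"
  by (induction n arbitrary: k) (use assms Poi_nonneg in \<open>auto simp: Bop_def unitp_def intro!: add_nonneg_nonneg mult_nonneg_nonneg\<close>)

lemma gen_le1: assumes "0 \<le> l" "unitp p" shows "gen (Poi l) p n k \<le> 1"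
proof (cases "k < 0")
  case True then show ?thesis using supp0_gen[OF supp0_Poi, of l p n] by (simp add: supp0_def)
next
  case False
  then have "gen (Poi l) p n k = \<bar>gen (Poi l) p n (int (nat k))\<bar>" using gen_nonneg[OF assms] by simp
  also have "\<dots> \<le> nrm (gen (Poi l) p n) (nat k)" by (rule abs_le_nrm) auto
  finally show ?thesis using gen_nrm1[OF assms, of n "nat k"] by linarith
qed

lemma gen_step_bound: assumes "0 \<le> l" "unitp p"
  shows "\<bar>gen (Poi l) p (Suc n) k - gen (Poi l) p n k\<bar> \<le> p n"
proof -
  have "gen (Poi l) p (Suc n) k - gen (Poi l) p n k = p n * (gen (Poi l) p n (k - 1) - gen (Poi l) p n k)"
    by (simp add: Bop_def algebra_simps)
  moreover have "\<bar>gen (Poi l) p n (k - 1) - gen (Poi l) p n k\<bar> \<le> 1"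
    using gen_nonneg[OF assms] gen_le1[OF assms] by (simp add: abs_le_iff) (smt (verit))
  ultimately show ?thesis using assms(2) unfolding unitp_def
    by (simp add: abs_mult) (metis mult_left_le mult.commute abs_ge_zero order_trans abs_of_nonneg)
qed

lemma gen_conv: assumes v: "valid l p"
  shows "(\<lambda>n. gen (Poi l) p n k) \<longlonglongrightarrow> pbf k (l, p)"
proof -
  have l0: "0 \<le> l" and u: "unitp p" and s: "summable p" using v by (auto simp: valid_def)
  define a where "a n = gen (Poi l) p n k" for n
  define d where "d i = a (Suc i) - a i" for i
  have "summable d"
    by (rule summable_comparison_test[OF _ s]) (use gen_step_bound[OF l0 u] in \<open>auto simp: d_def a_def\<close>)
  then have "(\<lambda>n. \<Sum>i<n. d i) \<longlonglongrightarrow> suminf d" by (rule summable_LIMSEQ)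
  then have "(\<lambda>n. a 0 + (\<Sum>i<n. d i)) \<longlonglongrightarrow> a 0 + suminf d" by (intro tendsto_intros)
  moreover have "a 0 + (\<Sum>i<n. d i) = a n" for n unfolding d_def sum_lessThan_telescope by simp
  ultimately have c: "a \<longlonglongrightarrow> a 0 + suminf d" by simp
  then have "convergent a" by (auto simp: convergent_def)
  moreover have ae: "a = (\<lambda>n. gen (Poi l) p n k)" by (simp add: a_def fun_eq_iff)
  then have "pbf k (l, p) = lim a" by (simp add: pbf_def pb_partial_gen)
  ultimately show ?thesis unfolding ae by (simp add: convergent_LIMSEQ_iff)
qed

lemma pbf_lim_le: assumes "valid l p" "\<And>n. n \<ge> N \<Longrightarrow> gen (Poi l) p n k \<le> c" shows "pbf k (l, p) \<le> c"
  using LIMSEQ_le_const2[OF gen_conv[OF assms(1)]] assms(2) by blast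

lemma pbf_lim_ge: assumes "valid l p" "\<And>n. n \<ge> N \<Longrightarrow> c \<le> gen (Poi l) p n k" shows "c \<le> pbf k (l, p)"
  using LIMSEQ_le_const[OF gen_conv[OF assms(1)]] assms(2) by blast

lemma pbf_nonneg: "valid l p \<Longrightarrow> 0 \<le> pbf k (l, p)"
  by (rule pbf_lim_ge[of _ _ 0]) (auto simp: valid_def intro: gen_nonneg)

lemma pbf_neg: assumes "valid l p" "k < 0" shows "pbf k (l, p) = 0"
proof -
  have "gen (Poi l) p n k = 0" for n using supp0_gen[OF supp0_Poi, of l p n] assms(2) by (simp add: supp0_def)
  then have "(\<lambda>n. gen (Poi l) p n k) \<longlonglongrightarrow> 0" by simp
  then show ?thesis using gen_conv[OF assms(1)] LIMSEQ_unique by blast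
qed

lemma pbf_partial_sum: assumes "valid l p" shows "(\<Sum>j\<le>K. pbf (int j) (l, p)) \<le> 1"
proof -
  have l0: "0 \<le> l" and u: "unitp p" using assms by (auto simp: valid_def)
  have "(\<lambda>n. \<Sum>j\<le>K. gen (Poi l) p n (int j)) \<longlonglongrightarrow> (\<Sum>j\<le>K. pbf (int j) (l, p))"
    by (intro tendsto_sum gen_conv[OF assms])
  moreover have "(\<Sum>j\<le>K. gen (Poi l) p n (int j)) \<le> 1" for n
    using gen_nrm1[OF l0 u, of n K] gen_nonneg[OF l0 u] by (simp add: nrm_def)
  ultimately show ?thesis by (intro LIMSEQ_le_const2) auto
qed

lemma pbf_tendsto0: assumes "valid l p" shows "(\<lambda>n. pbf (int n) (l, p)) \<longlonglongrightarrow> 0"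
proof -
  have "summable (\<lambda>n. pbf (int n) (l, p))"
  proof (rule summableI_nonneg_bounded)
    show "0 \<le> pbf (int n) (l, p)" for n using pbf_nonneg[OF assms] .
    show "(\<Sum>i<n. pbf (int i) (l, p)) \<le> 1" for n
    proof (cases n)
      case 0 then show ?thesis by simp
    next
      case (Suc m)
      then have "{..<n} = {..m}" by auto
      then show ?thesis using pbf_partial_sum[OF assms, of m] by simp
    qed
  qed
  then show ?thesis by (rule summable_LIMSEQ_zero)
qed

lemma ULC_gen: assumes "0 \<le> l" "unitp p" shows "ULC (gen (Poi l) p n)"
proof (induction n)
  case 0 then show ?case using Poi_ULC[OF assms(1)] by simp
next
  case (Suc n)
  show ?case using assms by (auto simp: unitp_def intro!: ULC_Bop Suc gen_nonneg supp0_gen supp0_Poi)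
qed

lemma pbf_ULC: assumes "valid l p" shows "ULC (\<lambda>k. pbf k (l, p))"
  unfolding ULC_def
proof (intro allI impI)
  fix A B :: int assume "-1 \<le> A" "A \<le> B"
  then have "of_int (B + 1) * gen (Poi l) p n A * gen (Poi l) p n (B + 1) \<le>
      of_int (A + 1) * gen (Poi l) p n (A + 1) * gen (Poi l) p n B" for n
    using ULC_gen[of l p n] assms unfolding valid_def ULC_def by blast
  moreover have "(\<lambda>n. of_int (B + 1) * gen (Poi l) p n A * gen (Poi l) p n (B + 1)) \<longlonglongrightarrow>
      of_int (B + 1) * pbf A (l, p) * pbf (B + 1) (l, p)"
    by (intro tendsto_intros gen_conv assms)
  moreover have "(\<lambda>n. of_int (A + 1) * gen (Poi l) p n (A + 1) * gen (Poi l) p n B) \<longlonglongrightarrow>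
      of_int (A + 1) * pbf (A + 1) (l, p) * pbf B (l, p)"
    by (intro tendsto_intros gen_conv assms)
  ultimately show "of_int (B + 1) * pbf A (l, p) * pbf (B + 1) (l, p) \<le> of_int (A + 1) * pbf (A + 1) (l, p) * pbf B (l, p)"
    by (intro LIMSEQ_le) auto
qed

lemma pbf_good: assumes "valid l p" "pbf k (l, p) \<noteq> 0" shows "good (\<lambda>k. pbf k (l, p))"
  unfolding good_def supp0_def
  using pbf_nonneg[OF assms(1)] pbf_neg[OF assms(1)] pbf_tendsto0[OF assms(1)] assms(2) pbf_ULC[OF assms(1)]
  by blast

lemma m_plus_LM: assumes "good (\<lambda>k. pbf k q)" shows "m_plus q = LM (\<lambda>k. pbf k q)"
  unfolding m_plus_def using THE_mplus[OF assms] by simp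

lemma m_minus_MM: assumes "good (\<lambda>k. pbf k q)" shows "m_minus q = MM (\<lambda>k. pbf k q)"
  unfolding m_minus_def MM_def m_plus_LM[OF assms] by simp

lemma is_mode_iff: assumes "good (\<lambda>k. pbf k q)"
  shows "is_mode k q \<longleftrightarrow> m_minus q \<le> k \<and> k \<le> m_plus q"
  unfolding is_mode_def m_plus_LM[OF assms] m_minus_MM[OF assms]
  using mode_iff[OF assms, of k] by simp

lemma gen_diff_nrm: assumes "0 \<le> l" "unitp p" "n \<le> m"
  shows "nrm (\<lambda>k. gen (Poi l) p m k - gen (Poi l) p n k) K \<le> 2 * (\<Sum>i\<in>{n..<m}. p i)"
  using assms(3)
proof (induction m)
  case 0 then show ?case by (simp add: nrm_def)
next
  case (Suc m)
  show ?case
  proof (cases "n = Suc m")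
    case True then show ?thesis by (simp add: nrm_def)
  next
    case False
    then have nm: "n \<le> m" using Suc by simp
    have eq: "(\<lambda>k. gen (Poi l) p (Suc m) k - gen (Poi l) p n k) =
        (\<lambda>k. (Bop (p m) (gen (Poi l) p m) k - gen (Poi l) p m k) + (gen (Poi l) p m k - gen (Poi l) p n k))"
      by simp
    have "nrm (\<lambda>k. gen (Poi l) p (Suc m) k - gen (Poi l) p n k) K \<le>
        nrm (\<lambda>k. Bop (p m) (gen (Poi l) p m) k - gen (Poi l) p m k) K + nrm (\<lambda>k. gen (Poi l) p m k - gen (Poi l) p n k) K"
      unfolding eq by (rule nrm_triangle)
    also have "\<dots> \<le> 2 * p m * nrm (gen (Poi l) p m) K + 2 * (\<Sum>i\<in>{n..<m}. p i)"
      using assms Suc.IH[OF nm] by (intro add_mono nrm_Bop_diff supp0_gen supp0_Poi) (auto simp: unitp_def)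
    also have "\<dots> \<le> 2 * p m + 2 * (\<Sum>i\<in>{n..<m}. p i)"
      using gen_nrm1[OF assms(1,2), of m K] assms(2) by (auto simp: unitp_def intro!: mult_left_le)
    also have "\<dots> = 2 * (\<Sum>i\<in>{n..<Suc m}. p i)" using nm by (simp add: algebra_simps)
    finally show ?thesis .
  qed
qed

definition tail :: "(nat \<Rightarrow> real) \<Rightarrow> nat \<Rightarrow> real" where
  "tail p n = suminf p - (\<Sum>i<n. p i)"

lemma tail_tendsto: assumes "summable p" shows "tail p \<longlonglongrightarrow> 0"
proof -
  have "(\<lambda>n. suminf p - (\<Sum>i<n. p i)) \<longlonglongrightarrow> suminf p - suminf p"
    by (intro tendsto_diff tendsto_const summable_LIMSEQ assms)
  then show ?thesis by (simp add: tail_def[abs_def])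
qed

lemma partial_le_tail: assumes "summable p" "\<And>i. 0 \<le> p i" "n \<le> m"
  shows "(\<Sum>i\<in>{n..<m}. p i) \<le> tail p n"
proof -
  have "(\<Sum>i<m. p i) \<le> suminf p" by (rule sum_le_suminf) (use assms in auto)
  moreover have "(\<Sum>i<m. p i) = (\<Sum>i<n. p i) + (\<Sum>i\<in>{n..<m}. p i)"
    using assms(3) by (metis atLeast0LessThan sum.atLeastLessThan_concat zero_le)
  ultimately show ?thesis by (simp add: tail_def)
qed

lemma pbf_gen_close: assumes v: "valid l p"
  shows "\<bar>pbf k (l, p) - gen (Poi l) p n k\<bar> \<le> 2 * tail p n"
proof (cases "k < 0")
  case True
  have "(\<Sum>i<n. p i) \<le> suminf p" by (rule sum_le_suminf) (use v in \<open>auto simp: valid_def unitp_def\<close>)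
  then show ?thesis using pbf_neg[OF v True] supp0_gen[OF supp0_Poi, of l p n] True
    by (simp add: supp0_def tail_def)
next
  case False
  then obtain j :: nat where j: "k = int j" by (metis nonneg_int_cases not_less)
  have l0: "0 \<le> l" and u: "unitp p" and s: "summable p" using v by (auto simp: valid_def)
  have "\<bar>gen (Poi l) p m k - gen (Poi l) p n k\<bar> \<le> 2 * tail p n" if "m \<ge> n" for m
  proof -
    have "\<bar>gen (Poi l) p m k - gen (Poi l) p n k\<bar> \<le> nrm (\<lambda>k. gen (Poi l) p m k - gen (Poi l) p n k) j"
      using abs_le_nrm[of j j "\<lambda>k. gen (Poi l) p m k - gen (Poi l) p n k"] j by simp
    also have "\<dots> \<le> 2 * (\<Sum>i\<in>{n..<m}. p i)" by (rule gen_diff_nrm[OF l0 u that])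
    also have "\<dots> \<le> 2 * tail p n" using partial_le_tail[OF s _ that] u by (simp add: unitp_def)
    finally show ?thesis .
  qed
  moreover have "(\<lambda>m. \<bar>gen (Poi l) p m k - gen (Poi l) p n k\<bar>) \<longlonglongrightarrow> \<bar>pbf k (l, p) - gen (Poi l) p n k\<bar>"
    by (intro tendsto_intros gen_conv v)
  ultimately show ?thesis by (intro LIMSEQ_le_const2) auto
qed


lemma Poi_tendsto0: assumes "0 \<le> l" shows "(\<lambda>n. Poi l (int n)) \<longlonglongrightarrow> 0"
proof -
  have "summable (\<lambda>n. Poi l (int n))"
  proof (rule summableI_nonneg_bounded)
    show "0 \<le> Poi l (int n)" for n using Poi_nonneg[OF assms] .
    show "(\<Sum>i<n. Poi l (int i)) \<le> 1" for n
    proof -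
      have "(\<Sum>i<n. Poi l (int i)) \<le> (\<Sum>i\<le>n. Poi l (int i))"
        by (rule sum_mono2) (use Poi_nonneg[OF assms] in auto)
      also have "\<dots> \<le> 1" using nrm_Poi[OF assms, of n] Poi_nonneg[OF assms] by (simp add: nrm_def)
      finally show ?thesis .
    qed
  qed
  then show ?thesis by (rule summable_LIMSEQ_zero)
qed

lemma good_Poi: assumes "0 \<le> l" shows "good (Poi l)"
proof -
  have "Poi l 0 \<noteq> 0" by (simp add: Poi_def)
  then show ?thesis unfolding good_def
    using Poi_nonneg[OF assms] supp0_Poi Poi_tendsto0[OF assms] Poi_ULC[OF assms] by blast
qed

lemma gap_above: assumes "good g"
  shows "\<exists>\<eta>>0. \<forall>j. int (LM g) < j \<longrightarrow> g j \<le> g (int (LM g)) - \<eta>"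
proof -
  let ?L = "LM g"
  define M where "M = g (int ?L)"
  have M0: "0 < M" using LM_pos[OF assms] by (simp add: M_def)
  from LIMSEQ_D[OF goodD(3)[OF assms], of "M / 2"] M0 obtain N where
    N: "\<And>n. n \<ge> N \<Longrightarrow> norm (g (int n) - 0) < M / 2" by auto
  define T where "T = (\<lambda>j. g (int j)) ` {Suc ?L..N}"
  define mx where "mx = Max (insert (M / 2) T)"
  have finT: "finite (insert (M / 2) T)" by (simp add: T_def)
  have mxlt: "mx < M"
  proof -
    have "mx \<in> insert (M / 2) T" unfolding mx_def by (rule Max_in[OF finT]) simp
    moreover have "x < M" if "x \<in> insert (M / 2) T" for x
      using that M0 LM_above[OF assms] by (auto simp: T_def M_def)
    ultimately show ?thesis by blast
  qed
  have "g j \<le> mx" if "int ?L < j" for j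
  proof -
    have "0 \<le> j" using that by simp
    then obtain n where n: "j = int n" using nonneg_int_cases by blast
    show ?thesis
    proof (cases "n \<le> N")
      case True
      then have "g j \<in> insert (M / 2) T" using that n by (auto simp: T_def)
      then show ?thesis unfolding mx_def using finT by (intro Max_ge) auto
    next
      case False
      then have "g j < M / 2" using N[of n] n goodD(1)[OF assms, of j] by auto
      moreover have "M / 2 \<le> mx" unfolding mx_def using finT by (intro Max_ge) auto
      ultimately show ?thesis by simp
    qed
  qed
  then show ?thesis using mxlt by (intro exI[of _ "M - mx"]) (auto simp: M_def)
qed

lemma gap_below: assumes "good g"
  shows "\<exists>\<eta>>0. \<forall>j. j < int (MM g) \<longrightarrow> g j \<le> g (int (LM g)) - \<eta>"
proof -
  define M where "M = g (int (LM g))"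
  have M0: "0 < M" using LM_pos[OF assms] by (simp add: M_def)
  define T where "T = (\<lambda>j. g (int j)) ` {..<MM g}"
  define mx where "mx = Max (insert 0 T)"
  have finT: "finite (insert 0 T)" by (simp add: T_def)
  have mxlt: "mx < M"
  proof -
    have "mx \<in> insert 0 T" unfolding mx_def by (rule Max_in[OF finT]) simp
    moreover have "x < M" if "x \<in> insert 0 T" for x
      using that M0 MM_below[OF assms] by (auto simp: T_def M_def)
    ultimately show ?thesis by blast
  qed
  have "g j \<le> mx" if "j < int (MM g)" for j
  proof (cases "j < 0")
    case True
    then have "g j = 0" using goodD(2)[OF assms] by simp
    then show ?thesis unfolding mx_def using finT by (simp add: Max_ge)
  next
    case False
    then have "0 \<le> j" by simp
    then obtain n where n: "j = int n" using nonneg_int_cases by blast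
    then have "g j \<in> insert 0 T" using that by (auto simp: T_def)
    then show ?thesis unfolding mx_def using finT by (intro Max_ge) auto
  qed
  then show ?thesis using mxlt by (intro exI[of _ "M - mx"]) (auto simp: M_def)
qed

lemma LM_close_above: assumes gf: "good f" and gh: "good h" and \<eta>: "0 < \<eta>"
  and gap: "\<forall>j. int (LM f) < j \<longrightarrow> f j \<le> f (int (LM f)) - \<eta>"
  and close: "\<And>j. \<bar>h j - f j\<bar> < \<eta> / 2"
  shows "LM h \<le> LM f"
proof (rule ccontr)
  assume "\<not> LM h \<le> LM f"
  then have lt: "int (LM f) < int (LM h)" by simp
  have "h (int (LM h)) < f (int (LM h)) + \<eta> / 2" using close[of "int (LM h)"] by linarith
  also have "\<dots> \<le> f (int (LM f)) - \<eta> / 2" using gap lt by fastforce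
  also have "\<dots> < h (int (LM f))" using close[of "int (LM f)"] by linarith
  finally show False using LM_max[OF gh, of "int (LM f)"] by simp
qed

lemma LM_close_below: assumes gf: "good f" and gh: "good h" and \<eta>: "0 < \<eta>"
  and gap: "\<forall>j. j < int (MM f) \<longrightarrow> f j \<le> f (int (LM f)) - \<eta>"
  and close: "\<And>j. \<bar>h j - f j\<bar> < \<eta> / 2"
  shows "MM f \<le> LM h"
proof (rule ccontr)
  assume "\<not> MM f \<le> LM h"
  then have lt: "int (LM h) < int (MM f)" by simp
  have "h (int (LM h)) < f (int (LM h)) + \<eta> / 2" using close[of "int (LM h)"] by linarith
  also have "\<dots> \<le> f (int (LM f)) - \<eta> / 2" using gap lt by fastforce
  also have "\<dots> < h (int (LM f))" using close[of "int (LM f)"] by linarith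
  finally show False using LM_max[OF gh, of "int (LM f)"] by simp
qed

definition aseq :: "(nat \<Rightarrow> real) \<Rightarrow> nat \<Rightarrow> nat \<Rightarrow> real" where
  "aseq p n = (\<lambda>i. if i < n then p i else 0)"

definition bseq :: "(nat \<Rightarrow> real) \<Rightarrow> real \<Rightarrow> nat \<Rightarrow> nat \<Rightarrow> real" where
  "bseq p' \<delta> n = (\<lambda>i. if i < n then p' i else if i < 2 * n then \<delta> / real n else 0)"

lemma aseq_gen: "gen g (aseq p n) (2 * n) = gen g p n"
proof -
  have "gen g (aseq p n) (2 * n) = gen g (aseq p n) n" by (rule gen_zeros) (auto simp: aseq_def)
  also have "\<dots> = gen g p n" by (rule gen_cong) (simp add: aseq_def)
  finally show ?thesis .
qed

lemma bseq_gen: "gen g (bseq p' \<delta> n) (2 * n) = gen (gen g (\<lambda>_. \<delta> / real n) n) p' n"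
proof -
  have "gen g (bseq p' \<delta> n) (2 * n) = gen (gen g (bseq p' \<delta> n) n) (\<lambda>i. bseq p' \<delta> n (n + i)) n"
    using gen_add[of g "bseq p' \<delta> n" n n] by (simp add: mult_2)
  also have "\<dots> = gen (gen g (\<lambda>i. bseq p' \<delta> n (n + i)) n) (bseq p' \<delta> n) n" by (rule gen_gen)
  also have "gen g (\<lambda>i. bseq p' \<delta> n (n + i)) n = gen g (\<lambda>_. \<delta> / real n) n"
    by (rule gen_cong) (simp add: bseq_def)
  also have "gen (gen g (\<lambda>_. \<delta> / real n) n) (bseq p' \<delta> n) n = gen (gen g (\<lambda>_. \<delta> / real n) n) p' n"
    by (rule gen_cong) (simp add: bseq_def)
  finally show ?thesis .
qed

lemma aseq_unitp: "unitp p \<Longrightarrow> unitp (aseq p n)"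
  by (auto simp: unitp_def aseq_def)

lemma bseq_unitp: "unitp p' \<Longrightarrow> 0 \<le> \<delta> \<Longrightarrow> \<delta> \<le> real n \<Longrightarrow> unitp (bseq p' \<delta> n)"
  by (auto simp: unitp_def bseq_def)

lemma ab_le: "(\<And>i. p i \<le> p' i) \<Longrightarrow> 0 \<le> \<delta> \<Longrightarrow> aseq p n i \<le> bseq p' \<delta> n i"
  by (auto simp: aseq_def bseq_def)

lemma bseq_close: assumes v': "valid l' p'" and l: "0 \<le> l" "l \<le> l'" and n: "0 < n" and dn: "l' - l \<le> real n"
  shows "\<bar>gen (Poi l) (bseq p' (l' - l) n) (2 * n) j - pbf j (l', p')\<bar> \<le> 2 * (l' - l)^2 / real n + 2 * tail p' n"
proof -
  define \<delta> where "\<delta> = l' - l"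
  define c where "c = \<delta> / real n"
  have d0: "0 \<le> \<delta>" using l by (simp add: \<delta>_def)
  have u': "unitp p'" and s': "summable p'" using v' by (auto simp: valid_def)
  define X where "X = gen (Poi l) (\<lambda>_. c) n"
  have lc: "l + (\<Sum>i<n. c) = l'" using n by (simp add: c_def \<delta>_def)
  show ?thesis
  proof (cases "j < 0")
    case True
    have "gen (Poi l) (bseq p' (l' - l) n) (2 * n) j = 0"
      using supp0_gen[OF supp0_Poi] True by (simp add: supp0_def)
    moreover have "pbf j (l', p') = 0" using pbf_neg[OF v' True] .
    moreover have "0 \<le> tail p' n" using partial_le_tail[OF s', of n n] u' by (simp add: unitp_def)
    ultimately show ?thesis using n by simp
  next
    case False
    then have "0 \<le> j" by simp
    then obtain m :: nat where m: "j = int m" using nonneg_int_cases by blast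
    have "\<bar>gen X p' n j - gen (Poi l') p' n j\<bar> \<le> nrm (\<lambda>k. gen X p' n k - gen (Poi l') p' n k) m"
      using abs_le_nrm[of m m "\<lambda>k. gen X p' n k - gen (Poi l') p' n k"] m by simp
    also have "\<dots> = nrm (gen (\<lambda>k. X k - Poi l' k) p' n) m" by (simp add: gen_diff)
    also have "\<dots> \<le> nrm (\<lambda>k. X k - Poi l' k) m"
    proof (rule nrm_gen[OF _ u'])
      show "supp0 (\<lambda>k. X k - Poi l' k)"
        using supp0_gen[OF supp0_Poi, of l "\<lambda>_. c" n] supp0_Poi[of l'] by (simp add: supp0_def X_def)
    qed
    also have "\<dots> \<le> 2 * (\<Sum>i<n. c ^ 2)"
    proof -
      have uc: "unitp (\<lambda>_. c)" using d0 dn n by (simp add: unitp_def c_def \<delta>_def)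
      show ?thesis using LeCam_chain[OF l(1) uc, of n m] unfolding lc X_def .
    qed
    also have "\<dots> = 2 * \<delta>^2 / real n" using n by (simp add: c_def power2_eq_square)
    finally have A: "\<bar>gen X p' n j - gen (Poi l') p' n j\<bar> \<le> 2 * \<delta>^2 / real n" .
    have B: "\<bar>pbf j (l', p') - gen (Poi l') p' n j\<bar> \<le> 2 * tail p' n" by (rule pbf_gen_close[OF v'])
    have "gen (Poi l) (bseq p' (l' - l) n) (2 * n) = gen X p' n"
      by (simp add: bseq_gen X_def c_def \<delta>_def)
    then show ?thesis using A B by (simp add: \<delta>_def)
  qed
qed


lemma eps_tendsto: assumes "summable p'"
  shows "(\<lambda>n. 2 * d^2 / real n + 2 * tail p' n) \<longlonglongrightarrow> 0"
proof -
  have "(\<lambda>n. (2 * d^2) / real n + 2 * tail p' n) \<longlonglongrightarrow> 0 + 2 * 0"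
    by (intro tendsto_intros tail_tendsto assms)
  then show ?thesis by simp
qed

lemma eventually_large: fixes e :: "nat \<Rightarrow> real" assumes "(e \<longlonglongrightarrow> 0)" "0 < r"
  shows "\<exists>N. \<forall>n\<ge>N. e n < r \<and> 0 < n \<and> d \<le> real n"
proof -
  obtain N where N: "\<And>n. n \<ge> N \<Longrightarrow> norm (e n - 0) < r" using LIMSEQ_D[OF assms] by blast
  define N' where "N' = max N (nat \<lceil>d\<rceil> + 1)"
  have "e n < r \<and> 0 < n \<and> d \<le> real n" if "n \<ge> N'" for n
  proof -
    have "e n < r" using N[of n] that by (auto simp: N'_def)
    moreover have "0 < n" using that by (auto simp: N'_def)
    moreover have "d \<le> real n"
    proof -
      have a: "d \<le> real (nat \<lceil>d\<rceil>)" by linarith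
      have "nat \<lceil>d\<rceil> \<le> n" using that unfolding N'_def by linarith
      then have "real (nat \<lceil>d\<rceil>) \<le> real n" by simp
      then show ?thesis using a by linarith
    qed
    ultimately show ?thesis by blast
  qed
  then show ?thesis by blast
qed

lemma U_inf: assumes v: "valid l p" and v': "valid l' p'" and ll: "l \<le> l'" and pp: "\<And>i. p i \<le> p' i"
  and gf': "good (\<lambda>k. pbf k (l', p'))" and k: "int (LM (\<lambda>k. pbf k (l', p'))) < k"
  shows "pbf k (l, p) \<le> pbf k (l', p')"
proof -
  let ?f' = "\<lambda>k. pbf k (l', p')"
  have l0: "0 \<le> l" and u: "unitp p" using v by (auto simp: valid_def)
  have u': "unitp p'" and s': "summable p'" using v' by (auto simp: valid_def)
  define \<delta> where "\<delta> = l' - l"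
  have d0: "0 \<le> \<delta>" using ll by (simp add: \<delta>_def)
  define e where "e n = 2 * \<delta>^2 / real n + 2 * tail p' n" for n
  have et: "e \<longlonglongrightarrow> 0" unfolding e_def[abs_def] by (rule eps_tendsto[OF s'])
  obtain \<eta> where \<eta>: "0 < \<eta>" and gap: "\<forall>j. int (LM ?f') < j \<longrightarrow> ?f' j \<le> ?f' (int (LM ?f')) - \<eta>"
    using gap_above[OF gf'] by blast
  obtain N where N: "\<And>n. n \<ge> N \<Longrightarrow> e n < \<eta> / 2 \<and> 0 < n \<and> \<delta> \<le> real n"
    using eventually_large[OF et, of "\<eta> / 2" \<delta>] \<eta> by auto
  have key: "gen (Poi l) p n k \<le> ?f' k + e n" if "n \<ge> N" for n
  proof -
    have en: "e n < \<eta> / 2" "0 < n" "\<delta> \<le> real n" using N[OF that] by auto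
    define hB where "hB = gen (Poi l) (bseq p' \<delta> n) (2 * n)"
    have ub: "unitp (bseq p' \<delta> n)" using bseq_unitp[OF u' d0 en(3)] .
    have ghB: "good hB" unfolding hB_def by (intro good_gen good_Poi l0 ub)
    have close: "\<bar>hB j - ?f' j\<bar> \<le> e n" for j
      unfolding hB_def e_def \<delta>_def using bseq_close[OF v' l0 ll en(2)] en(3) by (simp add: \<delta>_def)
    have "LM hB \<le> LM ?f'"
    proof (rule LM_close_above[OF gf' ghB \<eta> gap])
      fix j show "\<bar>hB j - ?f' j\<bar> < \<eta> / 2" using close[of j] en(1) by linarith
    qed
    then have kB: "int (LM hB) < k" using k by linarith
    have "gen (Poi l) (aseq p n) (2 * n) k \<le> hB k"
      unfolding hB_def
      by (rule path_U(1)[OF good_Poi[OF l0] aseq_unitp[OF u] ub ab_le[OF pp d0]])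
         (use kB in \<open>simp add: hB_def\<close>)
    then have "gen (Poi l) p n k \<le> hB k" by (simp add: aseq_gen)
    also have "\<dots> \<le> ?f' k + e n" using close[of k] by linarith
    finally show ?thesis .
  qed
  have "(\<lambda>n. ?f' k + e n) \<longlonglongrightarrow> ?f' k + 0" by (intro tendsto_intros et)
  then show ?thesis using gen_conv[OF v, of k] key by (intro LIMSEQ_le) auto
qed

lemma D_inf: assumes v: "valid l p" and v': "valid l' p'" and ll: "l \<le> l'" and pp: "\<And>i. p i \<le> p' i"
  and gf: "good (\<lambda>k. pbf k (l, p))" and k: "k < int (MM (\<lambda>k. pbf k (l, p)))"
  shows "pbf k (l', p') \<le> pbf k (l, p)"
proof -
  let ?f = "\<lambda>k. pbf k (l, p)" and ?f' = "\<lambda>k. pbf k (l', p')"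
  have l0: "0 \<le> l" and u: "unitp p" and s: "summable p" using v by (auto simp: valid_def)
  have u': "unitp p'" and s': "summable p'" using v' by (auto simp: valid_def)
  define \<delta> where "\<delta> = l' - l"
  have d0: "0 \<le> \<delta>" using ll by (simp add: \<delta>_def)
  define e where "e n = 2 * \<delta>^2 / real n + 2 * tail p' n" for n
  have et: "e \<longlonglongrightarrow> 0" unfolding e_def[abs_def] by (rule eps_tendsto[OF s'])
  define e2 where "e2 n = 2 * tail p n" for n
  have et2: "e2 \<longlonglongrightarrow> 0" unfolding e2_def[abs_def] using tendsto_mult_right_zero[OF tail_tendsto[OF s], of 2] by simp
  obtain \<eta> where \<eta>: "0 < \<eta>" and gap: "\<forall>j. j < int (MM ?f) \<longrightarrow> ?f j \<le> ?f (int (LM ?f)) - \<eta>"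
    using gap_below[OF gf] by blast
  obtain N where N: "\<And>n. n \<ge> N \<Longrightarrow> e n < \<eta> / 2 \<and> 0 < n \<and> \<delta> \<le> real n"
    using eventually_large[OF et, of "\<eta> / 2" \<delta>] \<eta> by auto
  obtain N2 where N2: "\<And>n. n \<ge> N2 \<Longrightarrow> e2 n < \<eta> / 2 \<and> 0 < n \<and> \<delta> \<le> real n"
    using eventually_large[OF et2, of "\<eta> / 2" \<delta>] \<eta> by auto
  have key: "?f' k - e n \<le> gen (Poi l) p n k" if "n \<ge> max N N2" for n
  proof -
    have en: "e n < \<eta> / 2" "0 < n" "\<delta> \<le> real n" using N that by auto
    have en2: "e2 n < \<eta> / 2" using N2 that by auto
    define hA where "hA = gen (Poi l) p n"
    define hB where "hB = gen (Poi l) (bseq p' \<delta> n) (2 * n)"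
    have ub: "unitp (bseq p' \<delta> n)" using bseq_unitp[OF u' d0 en(3)] .
    have ghA: "good hA" unfolding hA_def by (intro good_gen good_Poi l0 u)
    have closeB: "\<bar>hB j - ?f' j\<bar> \<le> e n" for j
      unfolding hB_def e_def \<delta>_def using bseq_close[OF v' l0 ll en(2)] en(3) by (simp add: \<delta>_def)
    have closeA: "\<bar>hA j - ?f j\<bar> \<le> e2 n" for j
      unfolding hA_def e2_def using pbf_gen_close[OF v, of j n] by linarith
    have "MM ?f \<le> LM hA"
    proof (rule LM_close_below[OF gf ghA \<eta> gap])
      fix j show "\<bar>hA j - ?f j\<bar> < \<eta> / 2" using closeA[of j] en2 by linarith
    qed
    then have kA: "k < int (LM (gen (Poi l) (aseq p n) (2 * n)))" using k by (simp add: aseq_gen hA_def)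
    have "hB k \<le> gen (Poi l) (aseq p n) (2 * n) k"
      unfolding hB_def
      by (rule path_D[OF good_Poi[OF l0] aseq_unitp[OF u] ub ab_le[OF pp d0] kA])
    then have "hB k \<le> hA k" by (simp add: aseq_gen hA_def)
    moreover have "?f' k - e n \<le> hB k" using closeB[of k] by linarith
    ultimately show ?thesis by (simp add: hA_def)
  qed
  have "(\<lambda>n. ?f' k - e n) \<longlonglongrightarrow> ?f' k - 0" by (intro tendsto_intros et)
  moreover have "\<exists>N'. \<forall>n\<ge>N'. ?f' k - e n \<le> gen (Poi l) p n k" using key by blast
  ultimately show ?thesis using gen_conv[OF v, of k] by (intro LIMSEQ_le) auto
qed


lemma gen_zbound: assumes "0 \<le> l" "unitp p" "0 \<le> z" "z \<le> 1"
  shows "z ^ j * gen (Poi l) p n (int j) \<le> exp (- ((1 - z) * (l + (\<Sum>i<n. p i))))"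
proof (induction n arbitrary: j)
  case 0 then show ?case using Poi_zbound[OF assms(1,3,4)] by simp
next
  case (Suc n)
  define \<Phi> where "\<Phi> = exp (- ((1 - z) * (l + (\<Sum>i<n. p i))))"
  define t where "t = p n"
  have t: "0 \<le> t" "t \<le> 1" using assms(2) by (auto simp: unitp_def t_def)
  let ?g = "gen (Poi l) p n"
  have IH: "\<And>j. z ^ j * ?g (int j) \<le> \<Phi>" using Suc by (simp add: \<Phi>_def)
  have "z ^ j * ?g (int j - 1) \<le> z * \<Phi>"
  proof (cases j)
    case 0
    then have "?g (int j - 1) = 0" using supp0_gen[OF supp0_Poi, of l p n] by (simp add: supp0_def)
    then show ?thesis using assms(3) by (simp add: \<Phi>_def)
  next
    case (Suc m)
    then have "z ^ j * ?g (int j - 1) = z * (z ^ m * ?g (int m))" by simp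
    also have "\<dots> \<le> z * \<Phi>" using IH[of m] assms(3) by (intro mult_left_mono) auto
    finally show ?thesis .
  qed
  then have "z ^ j * gen (Poi l) p (Suc n) (int j) \<le> (1 - t) * \<Phi> + t * (z * \<Phi>)"
  proof -
    assume b: "z ^ j * ?g (int j - 1) \<le> z * \<Phi>"
    have e: "z ^ j * gen (Poi l) p (Suc n) (int j) = (1 - t) * (z ^ j * ?g (int j)) + t * (z ^ j * ?g (int j - 1))"
      by (simp add: Bop_def t_def algebra_simps)
    show ?thesis unfolding e using IH[of j] b t by (intro add_mono mult_left_mono) auto
  qed
  also have "\<dots> = (1 - t * (1 - z)) * \<Phi>" by (simp add: algebra_simps)
  also have "\<dots> \<le> exp (- (t * (1 - z))) * \<Phi>"
    using exp_minus_ge[of "t * (1 - z)"] by (intro mult_right_mono) (auto simp: \<Phi>_def)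
  also have "\<dots> = exp (- ((1 - z) * (l + (\<Sum>i<Suc n. p i))))"
    by (simp add: \<Phi>_def t_def exp_add[symmetric] algebra_simps)
  finally show ?case .
qed

lemma pbf_zbound: assumes v: "valid l p" and z: "0 \<le> z" "z \<le> 1"
  shows "z ^ j * pbf (int j) (l, p) \<le> exp (- ((1 - z) * (l + (\<Sum>i<n. p i))))"
proof -
  have l0: "0 \<le> l" and u: "unitp p" using v by (auto simp: valid_def)
  have "z ^ j * gen (Poi l) p m (int j) \<le> exp (- ((1 - z) * (l + (\<Sum>i<n. p i))))" if "m \<ge> n" for m
  proof -
    have "(\<Sum>i<n. p i) \<le> (\<Sum>i<m. p i)" using that u by (intro sum_mono2) (auto simp: unitp_def)
    then have "exp (- ((1 - z) * (l + (\<Sum>i<m. p i)))) \<le> exp (- ((1 - z) * (l + (\<Sum>i<n. p i))))"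
      using z by (auto intro!: mult_left_mono)
    then show ?thesis using gen_zbound[OF l0 u z, of j m] by linarith
  qed
  moreover have "(\<lambda>m. z ^ j * gen (Poi l) p m (int j)) \<longlonglongrightarrow> z ^ j * pbf (int j) (l, p)"
    by (intro tendsto_intros gen_conv v)
  ultimately show ?thesis by (intro LIMSEQ_le_const2) auto
qed

lemma chernoff: assumes v: "valid l p" and c: "0 < c" "c \<le> pbf (int k) (l, p)"
  shows "l + (\<Sum>i<n. p i) \<le> - 2 * ln (c / 2 ^ k)"
proof -
  have "(1/2) ^ k * c \<le> (1/2) ^ k * pbf (int k) (l, p)" using c by (intro mult_left_mono) auto
  also have "\<dots> \<le> exp (- ((1 - 1/2) * (l + (\<Sum>i<n. p i))))" by (rule pbf_zbound[OF v]) auto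
  finally have "c / 2 ^ k \<le> exp (- ((l + (\<Sum>i<n. p i)) / 2))" by (simp add: power_divide)
  then have "ln (c / 2 ^ k) \<le> ln (exp (- ((l + (\<Sum>i<n. p i)) / 2)))"
    using c by (subst ln_le_cancel_iff) auto
  then have "ln (c / 2 ^ k) \<le> - ((l + (\<Sum>i<n. p i)) / 2)" by simp
  then show ?thesis by (simp add: field_simps)
qed

lemma gen_cont: assumes "\<And>k. (\<lambda>m. g m k) \<longlonglongrightarrow> g0 k" "\<And>i. i < N \<Longrightarrow> (\<lambda>m. p m i) \<longlonglongrightarrow> p0 i"
  shows "(\<lambda>m. gen (g m) (p m) N k) \<longlonglongrightarrow> gen g0 p0 N k"
  using assms(2)
proof (induction N arbitrary: k)
  case 0 then show ?case using assms(1) by simp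
next
  case (Suc N)
  have IH: "\<And>k. (\<lambda>m. gen (g m) (p m) N k) \<longlonglongrightarrow> gen g0 p0 N k" using Suc by simp
  have pN: "(\<lambda>m. p m N) \<longlonglongrightarrow> p0 N" using Suc by simp
  show ?case unfolding gen.simps Bop_def
    by (intro tendsto_intros IH pN)
qed

lemma sum_split_shift: fixes p :: "nat \<Rightarrow> real" shows "(\<Sum>i<N + m. p i) = (\<Sum>i<N. p i) + (\<Sum>i<m. p (N + i))"
  by (induction m) (auto simp: add.assoc)

lemma decr_le: fixes p :: "nat \<Rightarrow> real" assumes "\<And>i. p (Suc i) \<le> p i" "i \<le> j" shows "p j \<le> p i"
  using assms(2)
proof (induction j)
  case 0 then show ?case by simp
next
  case (Suc j)
  show ?case
  proof (cases "i = Suc j")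
    case True then show ?thesis by simp
  next
    case False then have "i \<le> j" using Suc by simp
    then show ?thesis using Suc assms(1)[of j] by simp
  qed
qed

lemma pN_bound: fixes p :: "nat \<Rightarrow> real" assumes "\<And>i. p (Suc i) \<le> p i" "\<And>i. 0 \<le> p i" "\<And>M. (\<Sum>i<M. p i) \<le> C"
  shows "p N \<le> C / real (Suc N)"
proof -
  have "real (Suc N) * p N = (\<Sum>i<Suc N. p N)" by simp
  also have "\<dots> \<le> (\<Sum>i<Suc N. p i)" by (intro sum_mono decr_le[of p, OF assms(1)]) auto
  also have "\<dots> \<le> C" by (rule assms(3))
  finally show ?thesis by (simp add: field_simps)
qed

lemma head_tail: assumes v: "valid l p" and dec: "\<And>i. p (Suc i) \<le> p i"
  and C: "\<And>M. l + (\<Sum>i<M. p i) \<le> C"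
  shows "\<bar>pbf (int j) (l, p) - gen (Poi (l + tail p N)) p N (int j)\<bar> \<le> 2 * C^2 / real (Suc N)"
proof -
  have l0: "0 \<le> l" and u: "unitp p" and s: "summable p" using v by (auto simp: valid_def)
  have pnn: "\<And>i. 0 \<le> p i" using u by (auto simp: unitp_def)
  define sh where "sh = (\<lambda>i. p (N + i))"
  have ush: "unitp sh" using u by (auto simp: unitp_def sh_def)
  have C0: "0 \<le> C" using C[of 0] l0 by simp
  have sumC: "\<And>M. (\<Sum>i<M. p i) \<le> C" using C l0 by (metis add_le_cancel_right le_add_same_cancel2 order_trans)
  have pN: "p N \<le> C / real (Suc N)" by (rule pN_bound[OF dec pnn sumC])
  define err where "err = 2 * C^2 / real (Suc N)"
  define A where "A m = gen (Poi l) p (N + m)" for m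
  define Bm where "Bm m = gen (Poi (l + (\<Sum>i<m. sh i))) p N" for m
  have A_eq: "A m = gen (gen (Poi l) sh m) p N" for m
    unfolding A_def sh_def gen_add by (rule gen_gen)
  have close: "\<bar>A m (int j) - Bm m (int j)\<bar> \<le> err" for m
  proof -
    have "\<bar>A m (int j) - Bm m (int j)\<bar> \<le> nrm (\<lambda>k. A m k - Bm m k) j"
      by (rule abs_le_nrm[of j j "\<lambda>k. A m k - Bm m k", simplified])
    also have "\<dots> = nrm (gen (\<lambda>k. gen (Poi l) sh m k - Poi (l + (\<Sum>i<m. sh i)) k) p N) j"
      by (simp add: A_eq Bm_def gen_diff)
    also have "\<dots> \<le> nrm (\<lambda>k. gen (Poi l) sh m k - Poi (l + (\<Sum>i<m. sh i)) k) j"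
    proof (rule nrm_gen[OF _ u])
      show "supp0 (\<lambda>k. gen (Poi l) sh m k - Poi (l + (\<Sum>i<m. sh i)) k)"
        using supp0_gen[OF supp0_Poi, of l sh m] supp0_Poi[of "l + (\<Sum>i<m. sh i)"] by (simp add: supp0_def)
    qed
    also have "\<dots> \<le> 2 * (\<Sum>i<m. (sh i)^2)" by (rule LeCam_chain[OF l0 ush])
    also have "(\<Sum>i<m. (sh i)^2) \<le> (\<Sum>i<m. p N * sh i)"
    proof (rule sum_mono)
      fix i
      have "sh i \<le> p N" unfolding sh_def by (rule decr_le[of p, OF dec]) simp
      then show "(sh i)^2 \<le> p N * sh i" using pnn[of "N + i"] by (simp add: power2_eq_square sh_def mult_right_mono)
    qed
    also have "\<dots> = p N * (\<Sum>i<m. sh i)" by (simp add: sum_distrib_left)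
    also have "\<dots> \<le> (C / real (Suc N)) * C"
    proof (rule mult_mono[OF pN])
      have "(\<Sum>i<m. sh i) \<le> (\<Sum>i<N + m. p i)"
      proof -
        have "(\<Sum>i<N + m. p i) = (\<Sum>i<N. p i) + (\<Sum>i<m. sh i)"
          unfolding sh_def by (rule sum_split_shift)
        moreover have "0 \<le> (\<Sum>i<N. p i)" using pnn by (intro sum_nonneg) auto
        ultimately show ?thesis by linarith
      qed
      then show "(\<Sum>i<m. sh i) \<le> C" using sumC[of "N + m"] by linarith
    qed (use C0 pnn in \<open>auto intro: sum_nonneg simp: sh_def\<close>)
    finally show ?thesis by (simp add: err_def power2_eq_square)
  qed
  have limA: "(\<lambda>m. A m (int j)) \<longlonglongrightarrow> pbf (int j) (l, p)"
    unfolding A_def using LIMSEQ_ignore_initial_segment[OF gen_conv[OF v, of "int j"], of N]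
    by (simp add: add.commute)
  have shsum: "(\<lambda>m. \<Sum>i<m. sh i) \<longlonglongrightarrow> tail p N"
  proof -
    have "summable sh" using s by (simp add: sh_def add.commute[of N])
    then have "(\<lambda>m. \<Sum>i<m. sh i) \<longlonglongrightarrow> suminf sh" by (rule summable_LIMSEQ)
    moreover have "suminf sh = tail p N"
      unfolding sh_def tail_def using suminf_minus_initial_segment[OF s, of N] by (simp add: add.commute)
    ultimately show ?thesis by simp
  qed
  have limB: "(\<lambda>m. Bm m (int j)) \<longlonglongrightarrow> gen (Poi (l + tail p N)) p N (int j)"
    unfolding Bm_def
    by (rule gen_cont[where p = "\<lambda>_. p", simplified]) (auto intro!: Poi_cont tendsto_intros shsum)
  have "(\<lambda>m. \<bar>A m (int j) - Bm m (int j)\<bar>) \<longlonglongrightarrow> \<bar>pbf (int j) (l, p) - gen (Poi (l + tail p N)) p N (int j)\<bar>"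
    by (intro tendsto_intros limA limB)
  then show ?thesis using close by (intro LIMSEQ_le_const2) (auto simp: err_def)
qed


lemma diag_sub: fixes x :: "nat \<Rightarrow> nat \<Rightarrow> real" assumes bd: "\<And>n i. \<bar>x n i\<bar> \<le> B"
  shows "\<exists>r. strict_mono r \<and> (\<forall>i. convergent (\<lambda>n. x (r n) i))"
proof -
  let ?P = "\<lambda>i s. convergent (\<lambda>n. x (s n) i)"
  interpret nat: subseqs ?P
  proof (unfold subseqs_def, intro allI impI)
    fix i :: nat and s :: "nat \<Rightarrow> nat" assume s: "strict_mono s"
    obtain f where f: "strict_mono f" "monoseq (\<lambda>n. x (s (f n)) i)"
      using seq_monosub[of "\<lambda>n. x (s n) i"] by blast
    have "Bseq (\<lambda>n. x (s (f n)) i)" by (rule BseqI'[of _ B]) (use bd in auto)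
    then have "convergent (\<lambda>n. x (s (f n)) i)" using f(2) by (rule Bseq_monoseq_convergent)
    then show "\<exists>r'. strict_mono r' \<and> convergent (\<lambda>n. x ((s \<circ> r') n) i)" using f(1) by auto
  qed
  define d where "d = nat.diagseq"
  have subseq: "strict_mono d" unfolding d_def using nat.subseq_diagseq by auto
  have "?P i d" for i
  proof -
    have Pn_seqseq: "?P i (nat.seqseq (Suc i))" by (rule nat.seqseq_holds)
    have 1: "(\<lambda>k. x ((nat.seqseq (Suc i) \<circ> (\<lambda>k. nat.fold_reduce (Suc i) k (Suc i + k))) k) i) =
      (\<lambda>k. x (nat.seqseq (Suc i) k) i) \<circ> (\<lambda>k. nat.fold_reduce (Suc i) k (Suc i + k))"
      by auto
    have 2: "?P i (d \<circ> ((+) (Suc i)))"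
      unfolding d_def nat.diagseq_seqseq 1
      by (intro convergent_subseq_convergent Pn_seqseq nat.subseq_diagonal_rest)
    then obtain L where 3: "(\<lambda>na. x (d (na + Suc i)) i) \<longlonglongrightarrow> L"
      by (auto simp: add.commute dest: convergentD)
    then have "(\<lambda>k. x (d k) i) \<longlonglongrightarrow> L" by (rule LIMSEQ_offset)
    then show ?thesis by (auto simp: convergent_def)
  qed
  then show ?thesis using subseq by blast
qed

lemma nabla_dec: "q \<in> nabla \<Longrightarrow> snd q (Suc i) \<le> snd q i"
  by (cases q) (auto simp: nabla_def)

lemma compact_seq: fixes s :: "nat \<Rightarrow> pbpar" and C :: real assumes sn: "\<And>n. s n \<in> nabla" and C: "\<And>n M. fst (s n) + (\<Sum>i<M. snd (s n) i) \<le> C"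
  shows "\<exists>r q. strict_mono r \<and> q \<in> nabla \<and> (\<forall>k. (\<lambda>n. pbf k (s (r n))) \<longlonglongrightarrow> pbf k q)"
proof -
  define l where "l n = fst (s n)" for n
  define p where "p n = snd (s n)" for n
  have sn': "s n = (l n, p n)" for n by (simp add: l_def p_def)
  have v: "valid (l n) (p n)" for n using nabla_valid[OF sn[of n]] by (simp add: l_def p_def)
  have l0: "0 \<le> l n" for n using v[of n] by (simp add: valid_def)
  have pu: "0 \<le> p n i" "p n i \<le> 1" for n i using v[of n] by (auto simp: valid_def unitp_def)
  have ps: "summable (p n)" for n using v[of n] by (simp add: valid_def)
  have pdec: "p n (Suc i) \<le> p n i" for n i using nabla_dec[OF sn[of n]] by (simp add: p_def)
  have Cn: "l n + (\<Sum>i<M. p n i) \<le> C" for n M using C by (simp add: l_def p_def)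
  define T where "T n = l n + suminf (p n)" for n
  have TC: "T n \<le> C" for n
  proof -
    have "suminf (p n) \<le> C - l n" by (rule suminf_le_const[OF ps]) (use Cn in \<open>smt (verit)\<close>)
    then show ?thesis by (simp add: T_def)
  qed
  have T0: "0 \<le> T n" for n
  proof -
    have "0 \<le> suminf (p n)" by (rule suminf_nonneg[OF ps]) (use pu in auto)
    then show ?thesis using l0[of n] by (simp add: T_def)
  qed
  have C0: "0 \<le> C" using TC[of 0] T0[of 0] by simp
  have partT: "(\<Sum>i<M. p n i) \<le> T n" for n M
  proof -
    have "(\<Sum>i<M. p n i) \<le> suminf (p n)" by (rule sum_le_suminf[OF ps]) (use pu in auto)
    then show ?thesis using l0[of n] by (simp add: T_def)
  qed
  define x where "x n i = (case i of 0 \<Rightarrow> T n | Suc i' \<Rightarrow> p n i')" for n i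
  have bd: "\<bar>x n i\<bar> \<le> C + 1" for n i
  proof (cases i)
    case 0 then show ?thesis using TC[of n] T0[of n] by (simp add: x_def)
  next
    case (Suc i')
    have "0 \<le> p n i'" "p n i' \<le> 1" using pu by auto
    then show ?thesis using Suc C0 by (simp add: x_def)
  qed
  obtain r where r: "strict_mono r" "\<And>i. convergent (\<lambda>n. x (r n) i)"
    using diag_sub[of x "C + 1"] bd by blast
  define Tl where "Tl = lim (\<lambda>n. T (r n))"
  define pl where "pl i = lim (\<lambda>n. p (r n) i)" for i
  have Tlim: "(\<lambda>n. T (r n)) \<longlonglongrightarrow> Tl"
    using r(2)[of 0] unfolding Tl_def x_def by (simp add: convergent_LIMSEQ_iff)
  have plim: "(\<lambda>n. p (r n) i) \<longlonglongrightarrow> pl i" for i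
    using r(2)[of "Suc i"] unfolding pl_def x_def by (simp add: convergent_LIMSEQ_iff)
  have pl01: "0 \<le> pl i" "pl i \<le> 1" for i
    using plim[of i] pu by (auto intro: LIMSEQ_le_const LIMSEQ_le_const2)
  have pldec: "pl (Suc i) \<le> pl i" for i
    using plim[of i] plim[of "Suc i"] pdec by (intro LIMSEQ_le) auto
  have plsum: "(\<Sum>i<M. pl i) \<le> Tl" for M
  proof -
    have "(\<lambda>n. \<Sum>i<M. p (r n) i) \<longlonglongrightarrow> (\<Sum>i<M. pl i)" by (intro tendsto_sum plim)
    then show ?thesis using Tlim partT by (intro LIMSEQ_le) auto
  qed
  have pls: "summable pl" by (rule summableI_nonneg_bounded[of _ Tl]) (use pl01 plsum in auto)
  have plsuminf: "suminf pl \<le> Tl" by (rule suminf_le_const[OF pls plsum])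
  define lam where "lam = Tl - suminf pl"
  have lam0: "0 \<le> lam" using plsuminf by (simp add: lam_def)
  define q where "q = (lam, pl)"
  have qn: "q \<in> nabla" unfolding q_def nabla_def using lam0 pl01 pldec pls by auto
  have vq: "valid lam pl" using nabla_valid[OF qn] by (simp add: q_def)
  have TlC: "Tl \<le> C" using Tlim TC by (intro LIMSEQ_le_const2) auto
  have Cq: "lam + (\<Sum>i<M. pl i) \<le> C" for M
  proof -
    have "(\<Sum>i<M. pl i) \<le> suminf pl" by (rule sum_le_suminf[OF pls]) (use pl01 in auto)
    then show ?thesis using TlC by (simp add: lam_def)
  qed
  have conv_nat: "(\<lambda>n. pbf (int j) (s (r n))) \<longlonglongrightarrow> pbf (int j) q" for j
  proof (rule LIMSEQ_I)
    fix \<epsilon> :: real assume \<epsilon>: "0 < \<epsilon>"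
    define N where "N = nat \<lceil>8 * C^2 / \<epsilon>\<rceil>"
    have errN: "2 * C^2 / real (Suc N) < \<epsilon> / 4"
    proof -
      have "8 * C^2 / \<epsilon> < real (Suc N)" unfolding N_def by linarith
      then have "8 * C^2 < real (Suc N) * \<epsilon>" using \<epsilon> by (simp add: divide_less_eq)
      then show ?thesis by (simp add: divide_less_eq mult.commute)
    qed
    define G where "G n = gen (Poi (l (r n) + tail (p (r n)) N)) (p (r n)) N (int j)" for n
    define G0 where "G0 = gen (Poi (lam + tail pl N)) pl N (int j)"
    have par: "(\<lambda>n. l (r n) + tail (p (r n)) N) \<longlonglongrightarrow> lam + tail pl N"
    proof -
      have e: "l (r n) + tail (p (r n)) N = T (r n) - (\<Sum>i<N. p (r n) i)" for n
        by (simp add: T_def tail_def)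
      have "(\<lambda>n. T (r n) - (\<Sum>i<N. p (r n) i)) \<longlonglongrightarrow> Tl - (\<Sum>i<N. pl i)"
        by (intro tendsto_intros Tlim plim)
      moreover have "Tl - (\<Sum>i<N. pl i) = lam + tail pl N" by (simp add: lam_def tail_def)
      ultimately show ?thesis unfolding e by simp
    qed
    have GG: "G \<longlonglongrightarrow> G0"
      unfolding G_def[abs_def] G0_def
      by (rule gen_cont) (auto intro!: Poi_cont par plim)
    obtain M where M: "\<And>n. n \<ge> M \<Longrightarrow> norm (G n - G0) < \<epsilon> / 4"
      using LIMSEQ_D[OF GG, of "\<epsilon> / 4"] \<epsilon> by auto
    have "norm (pbf (int j) (s (r n)) - pbf (int j) q) < \<epsilon>" if "n \<ge> M" for n
    proof -
      have h1: "\<bar>pbf (int j) (s (r n)) - G n\<bar> \<le> 2 * C^2 / real (Suc N)"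
        unfolding sn' G_def
        by (rule head_tail[OF v]) (use pdec Cn in auto)
      have h2: "\<bar>pbf (int j) q - G0\<bar> \<le> 2 * C^2 / real (Suc N)"
        unfolding q_def G0_def
        by (rule head_tail[OF vq]) (use pldec Cq in auto)
      have h3: "\<bar>G n - G0\<bar> < \<epsilon> / 4" using M[OF that] by simp
      obtain E where E: "E = 2 * C^2 / real (Suc N)" by blast
      have "\<bar>pbf (int j) (s (r n)) - pbf (int j) q\<bar> < \<epsilon>"
        using h1 h2 h3 errN unfolding E[symmetric] by linarith
      then show ?thesis by simp
    qed
    then show "\<exists>no. \<forall>n\<ge>no. norm (pbf (int j) (s (r n)) - pbf (int j) q) < \<epsilon>" by blast
  qed
  have "(\<lambda>n. pbf k (s (r n))) \<longlonglongrightarrow> pbf k q" for k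
  proof (cases "k < 0")
    case True
    have "pbf k (s (r n)) = 0" for n using pbf_neg[OF v True] by (simp add: sn')
    moreover have "pbf k q = 0" using pbf_neg[OF vq True] by (simp add: q_def)
    ultimately show ?thesis by simp
  next
    case False
    then have "0 \<le> k" by simp
    then obtain j where "k = int j" using nonneg_int_cases by blast
    then show ?thesis using conv_nat[of j] by simp
  qed
  then show ?thesis using r(1) qn by blast
qed


lemma U_nabla: assumes "q \<in> nabla" "q' \<in> nabla" "pb_le q q'" "good (\<lambda>k. pbf k q')" "int (m_plus q') < k"
  shows "pbf k q \<le> pbf k q'"
proof -
  obtain l p where q: "q = (l, p)" by (cases q)
  obtain l' p' where q': "q' = (l', p')" by (cases q')
  show ?thesis
    using U_inf[of l p l' p' k] nabla_valid[OF assms(1)] nabla_valid[OF assms(2)] assms(3,4,5)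
      m_plus_LM[OF assms(4)] by (simp add: q q' pb_le_def)
qed

lemma D_nabla: assumes "q \<in> nabla" "q' \<in> nabla" "pb_le q q'" "good (\<lambda>k. pbf k q)" "k < int (m_minus q)"
  shows "pbf k q' \<le> pbf k q"
proof -
  obtain l p where q: "q = (l, p)" by (cases q)
  obtain l' p' where q': "q' = (l', p')" by (cases q')
  show ?thesis
    using D_inf[of l p l' p' k] nabla_valid[OF assms(1)] nabla_valid[OF assms(2)] assms(3,4,5)
      m_minus_MM[OF assms(4)] by (simp add: q q' pb_le_def)
qed

lemma good_nabla: assumes "q \<in> nabla" "pbf k q \<noteq> 0" shows "good (\<lambda>k. pbf k q)"
proof -
  obtain l p where q: "q = (l, p)" by (cases q)
  show ?thesis using pbf_good[of l p k] nabla_valid[OF assms(1)] assms(2) by (simp add: q)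
qed

lemma pbf_nonneg_nabla: assumes "q \<in> nabla" shows "0 \<le> pbf k q"
proof -
  obtain l p where q: "q = (l, p)" by (cases q)
  show ?thesis using pbf_nonneg[of l p k] nabla_valid[OF assms(1)] by (simp add: q)
qed

lemma pbf_le1_nabla: assumes "q \<in> nabla" shows "pbf k q \<le> 1"
proof -
  obtain l p where q: "q = (l, p)" by (cases q)
  have v: "valid l p" using nabla_valid[OF assms] by (simp add: q)
  show ?thesis
  proof (cases "k < 0")
    case True then show ?thesis using pbf_neg[OF v True] by (simp add: q)
  next
    case False
    then have "0 \<le> k" by simp
    then obtain j where j: "k = int j" using nonneg_int_cases by blast
    have "pbf (int j) (l, p) \<le> (\<Sum>i\<le>j. pbf (int i) (l, p))"
      by (rule member_le_sum) (use pbf_nonneg[OF v] in auto)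
    then show ?thesis using pbf_partial_sum[OF v, of j] j q by simp
  qed
qed

lemma up_chain: assumes PN: "P \<subseteq> nabla" and dir: "directed P"
  shows "\<forall>q\<in>P. good (\<lambda>k. pbf k q) \<longrightarrow> m_plus q + Suc d = k \<longrightarrow> (\<exists>q''\<in>P. pbf (int k) q < pbf (int k) q'')"
proof (induction d)
  case 0
  show ?case
  proof (intro ballI impI)
    fix q assume qP: "q \<in> P" and g: "good (\<lambda>k. pbf k q)" and mk: "m_plus q + Suc 0 = k"
    obtain q' where q': "q' \<in> P" "pb_le q q'" "m_plus q' = m_plus q + 1"
      "pbf (int (m_plus q) + 1) q' > pbf (int (m_plus q) + 1) q"
      using dir qP unfolding directed_def by blast
    have "int (m_plus q) + 1 = int k" using mk by simp
    then show "\<exists>q''\<in>P. pbf (int k) q < pbf (int k) q''" using q' by auto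
  qed
next
  case (Suc d)
  show ?case
  proof (intro ballI impI)
    fix q assume qP: "q \<in> P" and g: "good (\<lambda>k. pbf k q)" and mk: "m_plus q + Suc (Suc d) = k"
    obtain q' where q': "q' \<in> P" "pb_le q q'" "m_plus q' = m_plus q + 1"
      "pbf (int (m_plus q) + 1) q' > pbf (int (m_plus q) + 1) q"
      using dir qP unfolding directed_def by blast
    have qn: "q \<in> nabla" "q' \<in> nabla" using PN qP q'(1) by auto
    have "pbf (int (m_plus q) + 1) q' \<noteq> 0"
      using q'(4) pbf_nonneg_nabla[OF qn(1), of "int (m_plus q) + 1"] by simp
    then have g': "good (\<lambda>k. pbf k q')" by (rule good_nabla[OF qn(2)])
    have mk': "m_plus q' + Suc d = k" using mk q'(3) by simp
    obtain q'' where q'': "q'' \<in> P" "pbf (int k) q' < pbf (int k) q''" using Suc q'(1) g' mk' by blast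
    have "pbf (int k) q \<le> pbf (int k) q'"
      by (rule U_nabla[OF qn q'(2) g']) (use mk' in simp)
    then show "\<exists>q''\<in>P. pbf (int k) q < pbf (int k) q''" using q'' by force
  qed
qed

lemma down_chain: assumes PN: "P \<subseteq> nabla" and dir: "directed P"
  shows "\<forall>q\<in>P. good (\<lambda>k. pbf k q) \<longrightarrow> m_minus q = k + Suc d \<longrightarrow> (\<exists>q''\<in>P. pbf (int k) q < pbf (int k) q'')"
proof (induction d)
  case 0
  show ?case
  proof (intro ballI impI)
    fix q assume qP: "q \<in> P" and g: "good (\<lambda>k. pbf k q)" and mk: "m_minus q = k + Suc 0"
    then have "m_minus q = k + 1" by simp
    then obtain q' where q': "q' \<in> P" "pb_le q' q" "m_minus q' = k" "pbf (int k) q < pbf (int k) q'"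
      using dir qP unfolding directed_def by blast
    then show "\<exists>q''\<in>P. pbf (int k) q < pbf (int k) q''" by auto
  qed
next
  case (Suc d)
  show ?case
  proof (intro ballI impI)
    fix q assume qP: "q \<in> P" and g: "good (\<lambda>k. pbf k q)" and mk: "m_minus q = k + Suc (Suc d)"
    then have "m_minus q = (k + Suc d) + 1" by simp
    then obtain q' where q': "q' \<in> P" "pb_le q' q" "m_minus q' = k + Suc d"
      "pbf (int (k + Suc d)) q < pbf (int (k + Suc d)) q'"
      using dir qP unfolding directed_def by blast
    have qn: "q \<in> nabla" "q' \<in> nabla" using PN qP q'(1) by auto
    have "pbf (int (k + Suc d)) q' \<noteq> 0"
      using q'(4) pbf_nonneg_nabla[OF qn(1), of "int (k + Suc d)"] by simp
    then have g': "good (\<lambda>k. pbf k q')" by (rule good_nabla[OF qn(2)])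
    obtain q'' where q'': "q'' \<in> P" "pbf (int k) q' < pbf (int k) q''" using Suc q'(1) g' q'(3) by blast
    have "pbf (int k) q \<le> pbf (int k) q'"
      by (rule D_nabla[OF qn(2) qn(1) q'(2) g']) (use q'(3) in simp)
    then show "\<exists>q''\<in>P. pbf (int k) q < pbf (int k) q''" using q'' by force
  qed
qed

lemma zero_pbf: "pbf k (0, \<lambda>_. 0) = (if k = 0 then 1 else 0)"
proof -
  have "gen (Poi 0) (\<lambda>_. 0) n = Poi 0" for n by (induction n) auto
  moreover have "Poi 0 k = (if k = 0 then 1 else 0)" by (simp add: Poi_def)
  ultimately show ?thesis by (simp add: pbf_def pb_partial_gen)
qed

lemma zero_nabla: "(0, \<lambda>_. 0) \<in> nabla" by (simp add: nabla_def)

lemma zero_good: "good (\<lambda>k. pbf k (0, \<lambda>_. 0))"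
  by (rule good_nabla[OF zero_nabla, of 0]) (simp add: zero_pbf)

lemma zero_mplus: "m_plus (0, \<lambda>_. 0) = 0"
proof -
  have "isLM (\<lambda>k. pbf k (0, \<lambda>_. 0)) 0" by (simp add: isLM_def zero_pbf)
  then show ?thesis using m_plus_LM[OF zero_good] LM_eqI[OF zero_good] by simp
qed

lemma climb: assumes PN: "P \<subseteq> nabla" and dir: "directed P"
  shows "\<exists>q\<in>P. m_plus q = j \<and> 0 < pbf (int j) q"
proof (induction j)
  case 0
  have "(0, \<lambda>_. 0) \<in> P" using dir by (simp add: directed_def)
  then show ?case using zero_mplus by (intro bexI[of _ "(0, \<lambda>_. 0)"]) (auto simp: zero_pbf)
next
  case (Suc j)
  then obtain q where q: "q \<in> P" "m_plus q = j" "0 < pbf (int j) q" by blast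
  obtain q' where q': "q' \<in> P" "pb_le q q'" "m_plus q' = j + 1" "pbf (int j + 1) q' > pbf (int j + 1) q"
    using dir q unfolding directed_def by blast
  have "0 \<le> pbf (int j + 1) q" using PN q(1) pbf_nonneg_nabla by blast
  then have "0 < pbf (int j + 1) q'" using q'(4) by linarith
  moreover have "int (Suc j) = int j + 1" by simp
  ultimately have "0 < pbf (int (Suc j)) q'" by (simp only:)
  then show ?case using q' by (intro bexI[of _ q']) auto
qed


theorem theorem3:
  fixes P :: "pbpar set"
  assumes "P \<subseteq> nabla" and "nabla_closed P" and "directed P"
  shows "cross_modal P"
  unfolding cross_modal_def
proof (intro allI conjI)
  fix k :: nat
  have PN: "P \<subseteq> nabla" and cl: "nabla_closed P" and dir: "directed P" using assms by auto
  define f where "f q = pbf (int k) q" for q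
  have zP: "(0, \<lambda>_. 0) \<in> P" using dir by (simp add: directed_def)
  then have Pne: "P \<noteq> {}" by auto
  have bdd: "bdd_above (f ` P)"
    using PN pbf_le1_nabla by (intro bdd_aboveI[of _ 1]) (auto simp: f_def)
  define Mx where "Mx = (SUP q\<in>P. f q)"
  have le: "f q \<le> Mx" if "q \<in> P" for q unfolding Mx_def by (rule cSUP_upper[OF that bdd])
  obtain q0 where q0: "q0 \<in> P" "m_plus q0 = k" "0 < pbf (int k) q0" using climb[OF PN dir] by blast
  have Mx0: "0 < Mx" using le[OF q0(1)] q0(3) by (simp add: f_def)
  have ex: "\<exists>q\<in>P. Mx - 1 / real (Suc n) < f q" for n
  proof -
    have "Mx - 1 / real (Suc n) < Mx" by simp
    then show ?thesis unfolding Mx_def using less_cSUP_iff[OF Pne bdd] by blast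
  qed
  have "\<forall>n. \<exists>q. q \<in> P \<and> Mx - 1 / real (Suc n) < f q" using ex by blast
  then obtain s where s0: "\<forall>n. s n \<in> P \<and> Mx - 1 / real (Suc n) < f (s n)"
    using choice[of "\<lambda>n q. q \<in> P \<and> Mx - 1 / real (Suc n) < f q"] by blast
  then have s: "\<And>n. s n \<in> P" "\<And>n. Mx - 1 / real (Suc n) < f (s n)" by auto
  define N0 where "N0 = nat \<lceil>2 / Mx\<rceil>"
  define s' where "s' n = s (n + N0)" for n
  have s'P: "s' n \<in> P" for n by (simp add: s'_def s)
  have s'half: "Mx / 2 \<le> f (s' n)" for n
  proof -
    have "2 / Mx \<le> real N0" unfolding N0_def by linarith
    then have "2 / Mx \<le> real (Suc (n + N0))" by simp
    then have "2 \<le> real (Suc (n + N0)) * Mx" using Mx0 by (simp add: divide_le_eq)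
    then have "1 / real (Suc (n + N0)) \<le> Mx / 2" by (simp add: divide_le_eq mult.commute)
    then show ?thesis using s(2)[of "n + N0"] by (simp add: s'_def)
  qed
  define C where "C = - 2 * ln ((Mx / 2) / 2 ^ k)"
  have Cb: "fst (s' n) + (\<Sum>i<M. snd (s' n) i) \<le> C" for n M
  proof -
    obtain l p where e: "s' n = (l, p)" by (cases "s' n")
    have v: "valid l p" using nabla_valid[of "s' n"] PN s'P[of n] e by auto
    have "l + (\<Sum>i<M. p i) \<le> C" unfolding C_def
      by (rule chernoff[OF v]) (use Mx0 s'half[of n] e in \<open>auto simp: f_def\<close>)
    then show ?thesis by (simp add: e)
  qed
  have s'N: "\<And>n. s' n \<in> nabla" using s'P PN by blast
  obtain r q where r: "strict_mono r" "q \<in> nabla" "\<forall>j. (\<lambda>n. pbf j (s' (r n))) \<longlonglongrightarrow> pbf j q"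
  proof -
    have "\<exists>r q. strict_mono r \<and> q \<in> nabla \<and> (\<forall>k. (\<lambda>n. pbf k (s' (r n))) \<longlonglongrightarrow> pbf k q)"
      by (rule compact_seq) (use s'N Cb in auto)
    then show ?thesis using that by blast
  qed
  have qP: "q \<in> P"
    using cl[unfolded nabla_closed_def, rule_format, of "\<lambda>j. s' (r j)" q] r(2,3) s'P by blast
  have "Mx \<le> f q"
  proof -
    have lb: "Mx - 1 / real (Suc n) \<le> f (s' (r n))" for n
    proof -
      have "n \<le> r n" using seq_suble[OF r(1)] .
      then have "1 / real (Suc (r n + N0)) \<le> 1 / real (Suc n)"
        by (intro divide_left_mono) auto
      then show ?thesis using s(2)[of "r n + N0"] by (simp add: s'_def)
    qed
    have "(\<lambda>n. 1 / real (Suc n)) \<longlonglongrightarrow> 0"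
      using LIMSEQ_inverse_real_of_nat by (simp add: inverse_eq_divide)
    then have "(\<lambda>n. Mx - 1 / real (Suc n)) \<longlonglongrightarrow> Mx - 0"
      by (intro tendsto_intros)
    moreover have "(\<lambda>n. f (s' (r n))) \<longlonglongrightarrow> f q" unfolding f_def using r(3) by blast
    ultimately show ?thesis using lb by (intro LIMSEQ_le) auto
  qed
  then have maxq: "\<forall>q'\<in>P. f q' \<le> f q" using le by force
  then show "\<exists>q\<in>P. \<forall>q'\<in>P. pbf (int k) q' \<le> pbf (int k) q" using qP by (auto simp: f_def)
next
  fix k :: nat
  have PN: "P \<subseteq> nabla" and dir: "directed P" using assms by auto
  show "\<forall>q\<in>P. (\<forall>q'\<in>P. pbf (int k) q' \<le> pbf (int k) q) \<longrightarrow> is_mode k q"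
  proof (intro ballI impI)
    fix q assume qP: "q \<in> P" and mx: "\<forall>q'\<in>P. pbf (int k) q' \<le> pbf (int k) q"
    obtain q0 where q0: "q0 \<in> P" "m_plus q0 = k" "0 < pbf (int k) q0" using climb[OF PN dir] by blast
    have pos: "0 < pbf (int k) q" using mx q0 by force
    have g: "good (\<lambda>j. pbf j q)" using good_nabla[of q "int k"] PN qP pos by auto
    show "is_mode k q"
    proof (rule ccontr)
      assume "\<not> is_mode k q"
      then have "\<not> (m_minus q \<le> k \<and> k \<le> m_plus q)" using is_mode_iff[OF g] by simp
      then consider "m_plus q < k" | "k < m_minus q" by linarith
      then show False
      proof cases
        case 1
        define d where "d = k - m_plus q - 1"
        have "m_plus q + Suc d = k" using 1 by (simp add: d_def)
        then obtain q'' where "q'' \<in> P" "pbf (int k) q < pbf (int k) q''"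
          using up_chain[OF PN dir, of d k] qP g by blast
        then show False using mx by force
      next
        case 2
        define d where "d = m_minus q - k - 1"
        have "m_minus q = k + Suc d" using 2 by (simp add: d_def)
        then obtain q'' where "q'' \<in> P" "pbf (int k) q < pbf (int k) q''"
          using down_chain[OF PN dir, of k d] qP g by blast
        then show False using mx by force
      qed
    qed
  qed
qed


end
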